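(* Let $0<\varepsilon<\tfrac12$ and let $A\ge1$. For $x$ large, integers $h$ with $(\log x)^\varepsilon\le2^h\le(\log x)^{1-\varepsilon}$, $y:=\exp(2^h)$, and integers $k$ with $A^{-1}\log\log x\le k\le A\log\log x$, we have $$\mathbb E_y(\chi_k)\asymp\frac{(h\log2)^k}{2^h\,k!}.$$ In particular, with $\xi:=\sqrt{\log\log x}$ and $\mathfrak b:=1/(\log4-1)$, for every integer $t$ with $|t-h/\mathfrak b|\le\xi$, $$\mathbb E_y(\chi_{h+t})\asymp\frac1{2^t\xi}.$$ The implied constants depend at most on $\varepsilon$ and $A$.
   Context: $E$ is the set of squarefree positive integers; $\omega(n)$ is the number of distinct prime factors of $n$; $\chi_k$ is the indicator function of $\{n\in E:\omega(n)=k\}$. For $y\ge2$, $\mathbb P_y$ is the probability measure on squarefree integers all of whose prime factors are $<y$, with $\mathbb P_y(\{n\})=\frac1n\prod_{p<y}(1+1/p)^{-1}$, and $\mathbb E_y$ the corresponding expectation. *)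

theory Defs
  imports "HOL-Analysis.Analysis" "HOL-Computational_Algebra.Squarefree"
begin

definition sqf_smooth :: "real \<Rightarrow> nat set" where
  "sqf_smooth y = {n. n > 0 \<and> squarefree n \<and> (\<forall>p\<in>prime_factors n. real p < y)}"

text \<open>E_y(f) = sum over n of f(n) P_y({n}), with P_y({n}) = (1/n) prod_{p<y} (1+1/p)^(-1).\<close>
definition Ey :: "real \<Rightarrow> (nat \<Rightarrow> real) \<Rightarrow> real" where
  "Ey y f = (\<Sum>n\<in>sqf_smooth y. f n / real n) /
            (\<Prod>p\<in>{p::nat. prime p \<and> real p < y}. 1 + 1 / real p)"

definition chi :: "nat \<Rightarrow> nat \<Rightarrow> real" where
  "chi k n = (if squarefree n \<and> n > 0 \<and> card (prime_factors n) = k then 1 else 0)"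

end

theory Submission
  imports Defs "HOL-Number_Theory.Prime_Powers"
begin

lemma ln1p_lower: fixes u :: real assumes "0 \<le> u" shows "u - u^2/2 \<le> ln (1 + u)"
proof -
  let ?f = "\<lambda>u::real. ln (1 + u) - (u - u^2/2)"
  have "?f 0 \<le> ?f u"
  proof (rule DERIV_nonneg_imp_nondecreasing[OF assms])
    fix x :: real assume x: "0 \<le> x" "x \<le> u"
    have "DERIV ?f x :> (1/(1+x) - (1 - x))"
      using x by (auto intro!: derivative_eq_intros simp: power2_eq_square)
    moreover have "1/(1+x) - (1 - x) \<ge> 0" using x by (simp add: field_simps power2_eq_square)
    ultimately show "\<exists>y. DERIV ?f x :> y \<and> 0 \<le> y" by blast
  qed
  thus ?thesis by simp
qed

lemma ln1p_upper: fixes u :: real assumes "0 \<le> u" shows "ln (1 + u) \<le> u - u^2/2 + u^3/3"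
proof -
  let ?f = "\<lambda>u::real. (u - u^2/2 + u^3/3) - ln (1 + u)"
  have "?f 0 \<le> ?f u"
  proof (rule DERIV_nonneg_imp_nondecreasing[OF assms])
    fix x :: real assume x: "0 \<le> x" "x \<le> u"
    have "DERIV ?f x :> ((1 - x + x^2) - 1/(1+x))"
      using x by (auto intro!: derivative_eq_intros simp: power2_eq_square)
    moreover have "(1 - x + x^2) - 1/(1+x) \<ge> 0" using x
      by (simp add: field_simps power2_eq_square)
    ultimately show "\<exists>y. DERIV ?f x :> y \<and> 0 \<le> y" by blast
  qed
  thus ?thesis by simp
qed

definition stir :: "nat \<Rightarrow> real" where
  "stir k = ln (fact k) - (real k + 1/2) * ln (real k) + real k"

lemma abs_helper: "-(a::real) \<le> L \<Longrightarrow> L \<le> a \<Longrightarrow> a \<le> B \<Longrightarrow> d = L \<Longrightarrow> \<bar>d\<bar> \<le> B"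
  by linarith

lemma le_helper: "(X::real) \<le> R \<Longrightarrow> R = 1 + a + b \<Longrightarrow> b \<le> c \<Longrightarrow> a + c = d \<Longrightarrow> X - 1 \<le> d"
  by linarith

lemma stir_step: assumes "k \<ge> 1"
  shows "\<bar>stir k - stir (Suc k)\<bar> \<le> 1/(2*real k) - 1/(2*real (Suc k))"
proof -
  define u where "u = 1 / real k"
  have u: "0 < u" "u \<le> 1" using assms by (auto simp: u_def)
  have "ln (fact (Suc k)) = ln (real (Suc k)) + ln (fact k)"
    by (simp add: ln_mult del: of_nat_Suc)
  hence "stir k - stir (Suc k) = (real k + 1/2) * (ln (real (Suc k)) - ln (real k)) - 1"
    unfolding stir_def by (simp add: algebra_simps)
  also have "ln (real (Suc k)) - ln (real k) = ln (1 + u)"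
    using assms by (simp add: u_def ln_div field_simps del: of_nat_Suc)
  also have "real k + 1/2 = 1/u + 1/2" by (simp add: u_def)
  finally have eq: "stir k - stir (Suc k) = (1/u + 1/2) * ln (1 + u) - 1" .
  have lo: "(1/u + 1/2) * ln (1 + u) - 1 \<ge> -(u^2/4)"
  proof -
    have "(1/u + 1/2) * ln (1 + u) \<ge> (1/u + 1/2) * (u - u^2/2)"
      using ln1p_lower[of u] u by (intro mult_left_mono) auto
    moreover have "(1/u + 1/2) * (u - u^2/2) = 1 - u^2/4" using u by (simp add: field_simps power2_eq_square)
    ultimately show ?thesis by simp
  qed
  have hi: "(1/u + 1/2) * ln (1 + u) - 1 \<le> u^2/4"
  proof -
    have h1: "(1/u + 1/2) * ln (1 + u) \<le> (1/u + 1/2) * (u - u^2/2 + u^3/3)"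
      using ln1p_upper[of u] u by (intro mult_left_mono) auto
    have h2: "(1/u + 1/2) * (u - u^2/2 + u^3/3) = 1 + u^2/12 + u^3/6" using u
      by (simp add: field_simps power2_eq_square power3_eq_cube)
    have h3: "u^3/6 \<le> u^2/6" using u by (simp add: power2_eq_square power3_eq_cube mult_left_le_one_le)
    have h4: "u^2/12 + u^2/6 = u^2/4" by simp
    show ?thesis by (rule le_helper[OF h1 h2 h3 h4])
  qed
  have e1: "u^2/4 = 1/(4*real k*real k)" by (simp add: u_def power2_eq_square)
  have e2: "1/(2*real k) - 1/(2*real (Suc k)) = 1/(2*real k*(real k + 1))"
    using assms by (simp add: field_simps)
  have "2*real k*(real k + 1) \<le> 4*real k*real k" using assms by (simp add: algebra_simps)
  hence "1/(4*real k*real k) \<le> 1/(2*real k*(real k + 1))"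
    using assms by (intro divide_left_mono) auto
  hence bnd: "u^2/4 \<le> 1/(2*real k) - 1/(2*real (Suc k))" using e1 e2 by simp
  show ?thesis by (rule abs_helper[OF lo hi bnd eq])

qed

lemma stir_bounds: assumes "k \<ge> 1" shows "\<bar>stir k - 1\<bar> \<le> 1/2 - 1/(2*real k)"
  using assms
proof (induction k rule: dec_induct)
  case base then show ?case by (simp add: stir_def)
next
  case (step n)
  from stir_step[OF step.hyps(1)] step.IH show ?case unfolding abs_le_iff by linarith
qed

lemma fact_stirling: assumes "k \<ge> 1"
  shows "exp (1/2) * sqrt (real k) * (real k / exp 1) ^ k \<le> fact k"
    and "fact k \<le> exp (3/2) * sqrt (real k) * (real k / exp 1) ^ k"
proof -
  have "1/(2*real k) \<ge> 0" by simp
  hence s: "1/2 \<le> stir k" "stir k \<le> 3/2" using stir_bounds[OF assms] unfolding abs_le_iff by linarith+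
  have kp: "real k > 0" using assms by simp
  have eq: "fact k = exp (stir k) * sqrt (real k) * (real k / exp 1) ^ k"
  proof -
    have kk: "exp (real k * ln (real k)) = real k ^ k"
      using kp by (simp add: ln_realpow[symmetric])
    have "exp (stir k) = fact k * exp (real k) / (exp ((real k + 1/2) * ln (real k)))"
      unfolding stir_def by (simp add: exp_diff exp_add)
    also have "exp ((real k + 1/2) * ln (real k)) = real k ^ k * sqrt (real k)"
      using kp kk by (simp add: exp_add distrib_right exp_of_nat_mult[symmetric] ln_sqrt[symmetric] algebra_simps)
    finally have "exp (stir k) = fact k * exp (real k) / (real k ^ k * sqrt (real k))" .
    moreover have "exp (real k) = exp 1 ^ k" by (simp add: exp_of_nat_mult[symmetric])
    ultimately show ?thesis using kp by (simp add: field_simps power_divide)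
  qed
  have pos: "sqrt (real k) * (real k / exp 1) ^ k > 0" using kp by simp
  show "exp (1/2) * sqrt (real k) * (real k / exp 1) ^ k \<le> fact k"
    unfolding eq mult.assoc using s pos by (intro mult_right_mono) auto
  show "fact k \<le> exp (3/2) * sqrt (real k) * (real k / exp 1) ^ k"
    unfolding eq mult.assoc using s pos by (intro mult_right_mono) auto
qed


definition esym :: "('a \<Rightarrow> real) \<Rightarrow> 'a set \<Rightarrow> nat \<Rightarrow> real" where
  "esym x P k = (\<Sum>T\<in>{T. T \<subseteq> P \<and> card T = k}. prod x T)"

lemma esym_0: "finite P \<Longrightarrow> esym x P 0 = 1"
proof -
  assume P: "finite P"
  have "{T. T \<subseteq> P \<and> card T = 0} = {{}}" using P by (auto simp: card_eq_0_iff dest: finite_subset[OF _ P])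
  thus ?thesis by (simp add: esym_def)
qed

lemma esym_empty_Suc: "esym x {} (Suc k) = 0"
  by (simp add: esym_def)

lemma subsets_insert_Suc:
  assumes "finite P" "a \<notin> P"
  shows "{T. T \<subseteq> insert a P \<and> card T = Suc k} =
         {T. T \<subseteq> P \<and> card T = Suc k} \<union> insert a ` {T. T \<subseteq> P \<and> card T = k}"
proof (intro equalityI subsetI)
  fix T assume T: "T \<in> {T. T \<subseteq> insert a P \<and> card T = Suc k}"
  show "T \<in> {T. T \<subseteq> P \<and> card T = Suc k} \<union> insert a ` {T. T \<subseteq> P \<and> card T = k}"
  proof (cases "a \<in> T")
    case True
    have fT: "finite T" using T assms(1) by (auto intro: finite_subset)
    have "T = insert a (T - {a})" using True by auto
    moreover have "T - {a} \<subseteq> P" using T by auto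
    moreover have "card (T - {a}) = k" using T True fT by (simp add: card_Diff_singleton)
    ultimately show ?thesis by blast
  next
    case False
    then show ?thesis using T by auto
  qed
next
  fix T assume "T \<in> {T. T \<subseteq> P \<and> card T = Suc k} \<union> insert a ` {T. T \<subseteq> P \<and> card T = k}"
  then show "T \<in> {T. T \<subseteq> insert a P \<and> card T = Suc k}"
  proof
    assume "T \<in> {T. T \<subseteq> P \<and> card T = Suc k}" thus ?thesis by auto
  next
    assume "T \<in> insert a ` {T. T \<subseteq> P \<and> card T = k}"
    then obtain U where U: "U \<subseteq> P" "card U = k" "T = insert a U" by auto
    have "finite U" using U assms(1) by (auto intro: finite_subset)
    moreover have "a \<notin> U" using U assms(2) by auto
    ultimately show ?thesis using U by auto
  qed
qed

lemma esym_insert: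
  assumes "finite P" "a \<notin> P"
  shows "esym x (insert a P) (Suc k) = esym x P (Suc k) + x a * esym x P k"
proof -
  let ?A = "{T. T \<subseteq> P \<and> card T = Suc k}" and ?B = "{T. T \<subseteq> P \<and> card T = k}"
  have fin: "finite {T. T \<subseteq> P}" using assms(1) by simp
  have fA: "finite ?A" by (rule finite_subset[OF _ fin]) auto
  have fB: "finite ?B" by (rule finite_subset[OF _ fin]) auto
  have disj: "?A \<inter> insert a ` ?B = {}" using assms(2) by auto
  have inj: "inj_on (insert a) ?B" using assms(2) by (auto simp: inj_on_def)
  have "esym x (insert a P) (Suc k) = (\<Sum>T\<in>?A. prod x T) + (\<Sum>T\<in>insert a ` ?B. prod x T)"
    unfolding esym_def subsets_insert_Suc[OF assms] using fA fB disj by (simp add: sum.union_disjoint)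
  also have "(\<Sum>T\<in>insert a ` ?B. prod x T) = (\<Sum>T\<in>?B. prod x (insert a T))"
    using inj by (simp add: sum.reindex)
  also have "\<dots> = (\<Sum>T\<in>?B. x a * prod x T)"
  proof (rule sum.cong[OF refl])
    fix T assume "T \<in> ?B"
    hence "finite T" "a \<notin> T" using assms by (auto intro: finite_subset)
    thus "prod x (insert a T) = x a * prod x T" by simp
  qed
  finally show ?thesis by (simp add: esym_def sum_distrib_left)
qed

lemma esym_nonneg: "(\<And>i. i \<in> P \<Longrightarrow> x i \<ge> 0) \<Longrightarrow> esym x P k \<ge> 0"
  unfolding esym_def by (intro sum_nonneg prod_nonneg) auto

lemma esym_mono:
  assumes "finite P" "P' \<subseteq> P" "\<And>i. i \<in> P \<Longrightarrow> x i \<ge> 0"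
  shows "esym x P' k \<le> esym x P k"
  unfolding esym_def
proof (rule sum_mono2)
  show "finite {T. T \<subseteq> P \<and> card T = k}" by (rule finite_subset[of _ "Pow P"]) (use assms(1) in auto)
  show "{T. T \<subseteq> P' \<and> card T = k} \<subseteq> {T. T \<subseteq> P \<and> card T = k}" using assms(2) by auto
  fix T assume "T \<in> {T. T \<subseteq> P \<and> card T = k} - {T. T \<subseteq> P' \<and> card T = k}"
  thus "0 \<le> prod x T" by (intro prod_nonneg) (use assms(3) in auto)
qed

lemma choose2_real: "real (n choose 2) = real n * (real n - 1) / 2"
proof (induction n)
  case 0 then show ?case by (simp add: numeral_2_eq_2)
next
  case (Suc n)
  have "real (Suc n choose 2) = real (n choose 2) + real n" by (simp add: numeral_2_eq_2)
  then show ?case using Suc by (simp add: field_simps)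
qed

lemma bern_pow: fixes S x :: real assumes "S \<ge> 0" "x \<ge> 0"
  shows "S ^ n + real n * x * S ^ (n - 1) \<le> (S + x) ^ n"
proof (induction n)
  case 0 then show ?case by simp
next
  case (Suc n)
  show ?case
  proof (cases n)
    case 0 then show ?thesis by simp
  next
    case (Suc m)
    have "(S + x) ^ Suc n = (S + x) * (S + x) ^ n" by simp
    also have "\<dots> \<ge> (S + x) * (S ^ n + real n * x * S ^ (n - 1))"
      using Suc.IH assms by (intro mult_left_mono) auto
    finally have h: "(S + x) * (S ^ n + real n * x * S ^ (n - 1)) \<le> (S + x) ^ Suc n" .
    have "(S + x) * (S ^ n + real n * x * S ^ (n - 1)) = S ^ Suc n + real (Suc n) * x * S ^ n + real n * x * x * S ^ m"
      using Suc by (simp add: algebra_simps)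
    moreover have "real n * x * x * S ^ m \<ge> 0" using assms by simp
    ultimately show ?thesis using h by simp
  qed
qed

lemma taylor_pow: fixes S x :: real assumes "S \<ge> 0" "x \<ge> 0"
  shows "(S + x) ^ n \<le> S ^ n + real n * x * S ^ (n - 1) + real (n choose 2) * x^2 * (S + x) ^ (n - 2)"
proof (induction n)
  case 0 then show ?case by simp
next
  case (Suc n)
  show ?case
  proof (cases n)
    case 0 then show ?thesis by simp
  next
    case (Suc m)
    have c: "real (Suc n choose 2) = real (n choose 2) + real n"
      by (simp add: numeral_2_eq_2)
    have "(S + x) ^ Suc n = (S + x) * (S + x) ^ n" by simp
    also have "\<dots> \<le> (S + x) * (S ^ n + real n * x * S ^ (n - 1) + real (n choose 2) * x^2 * (S + x) ^ (n - 2))"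
      using Suc.IH assms by (intro mult_left_mono) auto
    also have "\<dots> = S ^ Suc n + real (Suc n) * x * S ^ n + real n * x^2 * S ^ m
                   + real (n choose 2) * x^2 * (S + x) ^ m"
    proof -
      have "real (n choose 2) * ((S + x) * (S + x) ^ (n - 2)) = real (n choose 2) * (S + x) ^ m"
      proof (cases m)
        case 0 then show ?thesis using Suc by (simp add: numeral_2_eq_2)
      next
        case (Suc l)
        hence "n - 2 = l" using \<open>n = Suc m\<close> by simp
        then show ?thesis using Suc by simp
      qed
      hence "real (n choose 2) * x^2 * ((S + x) * (S + x) ^ (n - 2)) = real (n choose 2) * x^2 * (S + x) ^ m"
        by (metis mult.assoc mult.commute)
      thus ?thesis using Suc by (simp add: algebra_simps power2_eq_square)
    qed
    also have "\<dots> \<le> S ^ Suc n + real (Suc n) * x * S ^ n + real n * x^2 * (S + x) ^ m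
                   + real (n choose 2) * x^2 * (S + x) ^ m"
      using assms by (simp add: power_mono mult_left_mono)
    also have "\<dots> = S ^ Suc n + real (Suc n) * x * S ^ (Suc n - 1) + real (Suc n choose 2) * x^2 * (S + x) ^ (Suc n - 2)"
      using Suc c by (simp add: algebra_simps)
    finally show ?thesis .
  qed
qed

lemma esym_upper:
  assumes "finite P" "\<And>i. i \<in> P \<Longrightarrow> x i \<ge> 0"
  shows "fact k * esym x P k \<le> (\<Sum>i\<in>P. x i) ^ k"
  using assms
proof (induction P arbitrary: k rule: finite_induct)
  case empty then show ?case by (cases k) (auto simp: esym_0 esym_empty_Suc)
next
  case (insert a P)
  let ?S = "\<Sum>i\<in>P. x i"
  have xa: "x a \<ge> 0" and xP: "\<And>i. i \<in> P \<Longrightarrow> x i \<ge> 0" using insert.prems by auto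
  have S0: "?S \<ge> 0" using xP by (simp add: sum_nonneg)
  show ?case
  proof (cases k)
    case 0 then show ?thesis using insert by (simp add: esym_0)
  next
    case (Suc m)
    have "fact k * esym x (insert a P) k = fact (Suc m) * esym x P (Suc m) + real (Suc m) * x a * (fact m * esym x P m)"
      using Suc insert.hyps by (simp add: esym_insert algebra_simps)
    also have "\<dots> \<le> ?S ^ Suc m + real (Suc m) * x a * ?S ^ m"
      using insert.IH[OF xP, of "Suc m"] insert.IH[OF xP, of m] xa
      by (intro add_mono mult_left_mono) auto
    also have "\<dots> \<le> (?S + x a) ^ Suc m" using bern_pow[OF S0 xa, of "Suc m"] by simp
    finally show ?thesis using Suc insert.hyps by (simp add: add.commute)
  qed
qed

lemma esym_lower:
  assumes "finite P" "\<And>i. i \<in> P \<Longrightarrow> x i \<ge> 0"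
  shows "(\<Sum>i\<in>P. x i) ^ k \<le> fact k * esym x P k + real (k choose 2) * (\<Sum>i\<in>P. x i ^ 2) * (\<Sum>i\<in>P. x i) ^ (k - 2)"
  using assms
proof (induction P arbitrary: k rule: finite_induct)
  case empty then show ?case by (cases k) (auto simp: esym_0 esym_empty_Suc)
next
  case (insert a P)
  let ?S = "\<Sum>i\<in>P. x i" and ?Q = "\<Sum>i\<in>P. x i ^ 2"
  have xa: "x a \<ge> 0" and xP: "\<And>i. i \<in> P \<Longrightarrow> x i \<ge> 0" using insert.prems by auto
  have S0: "?S \<ge> 0" using xP by (simp add: sum_nonneg)
  have Q0: "?Q \<ge> 0" by (simp add: sum_nonneg)
  have sS: "(\<Sum>i\<in>insert a P. x i) = ?S + x a" and sQ: "(\<Sum>i\<in>insert a P. x i ^ 2) = ?Q + x a ^ 2"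
    using insert.hyps by (simp_all add: add.commute)
  show ?case
  proof (cases k)
    case 0 then show ?thesis using insert by (simp add: esym_0 numeral_2_eq_2)
  next
    case (Suc m)
    show ?thesis
    proof (cases m)
      case 0
      have "esym x P 1 = ?S"
      proof -
        have "{T. T \<subseteq> P \<and> card T = 1} = (\<lambda>i. {i}) ` P" by (auto simp: card_Suc_eq)
        moreover have "inj_on (\<lambda>i. {i}) P" by (auto simp: inj_on_def)
        ultimately show ?thesis by (simp add: esym_def sum.reindex)
      qed
      then show ?thesis using Suc 0 insert.hyps sS by (simp add: esym_insert esym_0 numeral_2_eq_2)
    next
      case (Suc j)
      have k: "k = Suc (Suc j)" using \<open>k = Suc m\<close> Suc by simp
      define A1 where "A1 = fact (Suc (Suc j)) * esym x P (Suc (Suc j))"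
      define A0 where "A0 = fact (Suc j) * esym x P (Suc j)"
      define C2 where "C2 = real (Suc (Suc j) choose 2)"
      define C1 where "C1 = real (Suc j choose 2)"
      have IH1: "?S ^ Suc (Suc j) \<le> A1 + C2 * ?Q * ?S ^ j"
        using insert.IH[OF xP, of "Suc (Suc j)"] unfolding A1_def C2_def by simp
      have IH0: "?S ^ Suc j \<le> A0 + C1 * ?Q * ?S ^ (j - 1)"
        using insert.IH[OF xP, of "Suc j"] unfolding A0_def C1_def by (simp add: numeral_2_eq_2)
      have T: "(?S + x a) ^ Suc (Suc j) \<le> ?S ^ Suc (Suc j) + real (Suc (Suc j)) * x a * ?S ^ Suc j + C2 * x a ^ 2 * (?S + x a) ^ j"
        using taylor_pow[OF S0 xa, of "Suc (Suc j)"] unfolding C2_def by simp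
      have B: "?S ^ j + real j * x a * ?S ^ (j - 1) \<le> (?S + x a) ^ j"
        using bern_pow[OF S0 xa, of j] .
      have id: "real (Suc (Suc j)) * C1 = C2 * real j"
        unfolding C1_def C2_def choose2_real by (simp add: field_simps)
      have C2_0: "C2 \<ge> 0" unfolding C2_def by simp
      have m1: "real (Suc (Suc j)) * x a * ?S ^ Suc j \<le> real (Suc (Suc j)) * x a * (A0 + C1 * ?Q * ?S ^ (j - 1))"
        using IH0 xa by (intro mult_left_mono) auto
      have m2: "C2 * ?Q * (?S ^ j + real j * x a * ?S ^ (j - 1)) \<le> C2 * ?Q * (?S + x a) ^ j"
        using B C2_0 Q0 by (intro mult_left_mono) auto
      have e1: "real (Suc (Suc j)) * x a * (A0 + C1 * ?Q * ?S ^ (j - 1)) =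
                real (Suc (Suc j)) * x a * A0 + C2 * ?Q * (real j * x a * ?S ^ (j - 1))"
      proof -
        have "real (Suc (Suc j)) * x a * (C1 * ?Q * ?S ^ (j - 1)) = (real (Suc (Suc j)) * C1) * (?Q * x a * ?S ^ (j - 1))"
          by (simp only: mult_ac)
        also have "\<dots> = (C2 * real j) * (?Q * x a * ?S ^ (j - 1))" by (simp only: id)
        finally show ?thesis by (simp add: algebra_simps)
      qed
      have goal: "(?S + x a) ^ Suc (Suc j) \<le> A1 + real (Suc (Suc j)) * x a * A0 + C2 * (?Q + x a ^ 2) * (?S + x a) ^ j"
      proof -
        have "(?S + x a) ^ Suc (Suc j) \<le> (A1 + C2 * ?Q * ?S ^ j) + real (Suc (Suc j)) * x a * (A0 + C1 * ?Q * ?S ^ (j - 1)) + C2 * x a ^ 2 * (?S + x a) ^ j"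
          using T IH1 m1 by linarith
        also have "\<dots> = A1 + real (Suc (Suc j)) * x a * A0 + C2 * ?Q * (?S ^ j + real j * x a * ?S ^ (j - 1)) + C2 * x a ^ 2 * (?S + x a) ^ j"
          unfolding e1 by (simp add: algebra_simps)
        also have "\<dots> \<le> A1 + real (Suc (Suc j)) * x a * A0 + C2 * ?Q * (?S + x a) ^ j + C2 * x a ^ 2 * (?S + x a) ^ j"
          using m2 by linarith
        also have "\<dots> = A1 + real (Suc (Suc j)) * x a * A0 + C2 * (?Q + x a ^ 2) * (?S + x a) ^ j"
          by (simp add: algebra_simps)
        finally show ?thesis .
      qed
      have "fact k * esym x (insert a P) k = A1 + real (Suc (Suc j)) * x a * A0"
        unfolding k A1_def A0_def using insert.hyps by (simp add: esym_insert algebra_simps)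
      then show ?thesis using goal unfolding k sS sQ C2_def by simp
    qed
  qed
qed


definition PP :: "real \<Rightarrow> nat set" where "PP y = {p. prime p \<and> real p < y}"

lemma finite_PP: "finite (PP y)"
proof -
  have "PP y \<subseteq> {..nat \<lceil>y\<rceil>}" unfolding PP_def by (auto simp: le_nat_iff le_ceiling_iff)
  thus ?thesis by (rule finite_subset) auto
qed

lemma sqf_prod_primes:
  assumes "finite T" "\<And>p. p \<in> T \<Longrightarrow> prime (p::nat)"
  shows "squarefree (\<Prod>T)" "prime_factors (\<Prod>T) = T" "\<Prod>T > 0"
proof -
  show "squarefree (\<Prod>T)"
    using assms by (intro squarefree_prod_coprime) (auto intro: primes_coprime squarefree_prime)
  have "prime_factors (prod id T) = \<Union>((prime_factors \<circ> id) ` T)"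
    using assms by (intro prime_factors_prod) (auto dest: prime_gt_0_nat)
  also have "\<dots> = T" using assms by (auto simp: prime_factorization_prime)
  finally show "prime_factors (\<Prod>T) = T" by simp
  show "\<Prod>T > 0" using assms by (auto intro!: prod_pos dest: prime_gt_0_nat)
qed

lemma prod_pf_sqf:
  assumes "squarefree (n::nat)" "n > 0"
  shows "\<Prod>(prime_factors n) = n"
proof -
  have "(\<Prod>p \<in> prime_factors n. p ^ multiplicity p n) = n"
    using prod_prime_factors[of n] assms by simp
  moreover have "\<And>p. p \<in> prime_factors n \<Longrightarrow> multiplicity p n = 1"
    using squarefree_factorial_semiring'[of n] assms by auto
  ultimately show ?thesis by simp
qed

lemma bij_sqf: "bij_betw (\<lambda>T. \<Prod>T) (Pow (PP y)) (sqf_smooth y)"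
proof (rule bij_betw_byWitness[where f' = prime_factors])
  show "\<forall>T\<in>Pow (PP y). prime_factors (\<Prod>T) = T"
    using finite_PP by (auto intro!: sqf_prod_primes(2) intro: finite_subset simp: PP_def)
  show "\<forall>n\<in>sqf_smooth y. \<Prod>(prime_factors n) = n"
    by (auto simp: sqf_smooth_def prod_pf_sqf)
  show "(\<lambda>T. \<Prod>T) ` Pow (PP y) \<subseteq> sqf_smooth y"
  proof
    fix n assume "n \<in> (\<lambda>T. \<Prod>T) ` Pow (PP y)"
    then obtain T where T: "T \<subseteq> PP y" "n = \<Prod>T" by auto
    have fT: "finite T" using T finite_PP finite_subset by blast
    have pr: "\<And>p. p \<in> T \<Longrightarrow> prime p" using T by (auto simp: PP_def)
    show "n \<in> sqf_smooth y" using sqf_prod_primes[OF fT pr] T by (auto simp: sqf_smooth_def PP_def)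
  qed
  show "prime_factors ` sqf_smooth y \<subseteq> Pow (PP y)"
    by (auto simp: sqf_smooth_def PP_def)
qed

lemma Ey_chi: "Ey y (chi k) = esym (\<lambda>p. 1 / real p) (PP y) k / (\<Prod>p\<in>PP y. 1 + 1 / real p)"
proof -
  have "(\<Sum>n\<in>sqf_smooth y. chi k n / real n) = (\<Sum>T\<in>Pow (PP y). chi k (\<Prod>T) / real (\<Prod>T))"
    using sum.reindex_bij_betw[OF bij_sqf, of "\<lambda>n. chi k n / real n"] by simp
  also have "\<dots> = (\<Sum>T\<in>Pow (PP y). if card T = k then (\<Prod>p\<in>T. 1 / real p) else 0)"
  proof (rule sum.cong[OF refl])
    fix T assume "T \<in> Pow (PP y)"
    hence fT: "finite T" and pr: "\<And>p. p \<in> T \<Longrightarrow> prime p" using finite_PP finite_subset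
      by (auto simp: PP_def)
    note s = sqf_prod_primes[OF fT pr]
    have "real (\<Prod>T) = (\<Prod>p\<in>T. real p)" by simp
    hence "1 / real (\<Prod>T) = (\<Prod>p\<in>T. 1 / real p)" by (simp add: prod_dividef)
    thus "chi k (\<Prod>T) / real (\<Prod>T) = (if card T = k then (\<Prod>p\<in>T. 1 / real p) else 0)"
      using s by (simp add: chi_def)
  qed
  also have "\<dots> = esym (\<lambda>p. 1 / real p) (PP y) k"
    unfolding esym_def using finite_PP by (subst sum.inter_filter[symmetric]) (auto intro!: sum.cong)
  finally show ?thesis unfolding Ey_def PP_def by simp
qed


definition psi :: "nat \<Rightarrow> real" where "psi n = (\<Sum>d\<in>{1..n}. mangoldt d)"

lemma psi_mono: "m \<le> n \<Longrightarrow> psi m \<le> psi n"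
  unfolding psi_def by (intro sum_mono2) (auto simp: mangoldt_nonneg)

lemma sum_div_count:
  fixes f :: "nat \<Rightarrow> real"
  shows "(\<Sum>d\<in>{1..n}. f d * real (n div d)) = (\<Sum>m\<in>{1..n}. \<Sum>d | d dvd m. f d)"
proof (induction n)
  case 0 then show ?case by simp
next
  case (Suc n)
  have split: "\<And>d. d \<ge> 1 \<Longrightarrow> real (Suc n div d) = real (n div d) + (if d dvd Suc n then 1 else 0)"
    by (auto simp: div_Suc dvd_eq_mod_eq_0)
  have "(\<Sum>d\<in>{1..Suc n}. f d * real (Suc n div d)) =
        (\<Sum>d\<in>{1..Suc n}. f d * real (n div d)) + (\<Sum>d\<in>{1..Suc n}. if d dvd Suc n then f d else 0)"
    by (subst sum.distrib[symmetric]) (auto intro!: sum.cong simp: split algebra_simps)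
  also have "(\<Sum>d\<in>{1..Suc n}. f d * real (n div d)) = (\<Sum>d\<in>{1..n}. f d * real (n div d))"
    by (simp add: sum.cl_ivl_Suc)
  also have "(\<Sum>d\<in>{1..Suc n}. if d dvd Suc n then f d else 0) = (\<Sum>d | d dvd Suc n. f d)"
  proof -
    have "{d. d dvd Suc n} = {d\<in>{1..Suc n}. d dvd Suc n}"
    proof (intro equalityI subsetI)
      fix d assume "d \<in> {d. d dvd Suc n}"
      hence "d dvd Suc n" by simp
      moreover from this have "d \<noteq> 0" by (rule_tac notI) simp
      ultimately show "d \<in> {d\<in>{1..Suc n}. d dvd Suc n}" by (auto dest: dvd_imp_le)
    qed auto
    hence "(\<Sum>d | d dvd Suc n. f d) = (\<Sum>d\<in>{d\<in>{1..Suc n}. d dvd Suc n}. f d)" by simp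
    also have "\<dots> = (\<Sum>d\<in>{1..Suc n}. if d dvd Suc n then f d else 0)"
      by (rule sum.inter_filter) simp
    finally show ?thesis by simp
  qed
  finally show ?case using Suc.IH by simp
qed

lemma ln_fact_mangoldt: "ln (fact n) = (\<Sum>d\<in>{1..n}. mangoldt d * real (n div d))"
proof -
  have "ln (fact n :: real) = (\<Sum>m\<in>{1..n}. ln (real m))"
    unfolding fact_prod of_nat_prod by (subst ln_prod) auto
  also have "\<dots> = (\<Sum>m\<in>{1..n}. \<Sum>d | d dvd m. mangoldt d)"
    by (intro sum.cong refl) (simp add: mangoldt_sum)
  finally show ?thesis using sum_div_count[of "mangoldt" n] by simp
qed


lemma two_div_le: "2 * (N div d) \<le> (2 * N) div (d::nat)"
proof (cases "d = 0")
  case False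
  have "N div d * d \<le> N" by simp
  hence "2 * (N div d) * d \<le> 2 * N" by (simp add: mult.assoc)
  thus ?thesis using False by (simp add: less_eq_div_iff_mult_less_eq)
qed simp

lemma cheb_step: "psi (2*N) - psi N \<le> real N * ln 4"
proof -
  have e1: "2 * ln (fact N) = (\<Sum>d\<in>{1..2*N}. mangoldt d * (2 * real (N div d)))"
  proof -
    have "(\<Sum>d\<in>{1..2*N}. mangoldt d * (2 * real (N div d))) = (\<Sum>d\<in>{1..N}. mangoldt d * (2 * real (N div d)))"
      by (rule sum.mono_neutral_right) auto
    moreover have "2 * ln (fact N) = (\<Sum>d\<in>{1..N}. 2 * (mangoldt d * real (N div d)))"
      by (simp add: ln_fact_mangoldt sum_distrib_left)
    moreover have "(\<Sum>d\<in>{1..N}. 2 * (mangoldt d * real (N div d))) = (\<Sum>d\<in>{1..N}. mangoldt d * (2 * real (N div d)))"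
      by (simp add: mult.left_commute)
    ultimately show ?thesis by simp
  qed
  have "psi (2*N) - psi N = (\<Sum>d\<in>{1..2*N}. if N < d then mangoldt d else 0)"
  proof -
    have "{1..2*N} = {1..N} \<union> {N<..2*N}" by auto
    hence "psi (2*N) = psi N + (\<Sum>d\<in>{N<..2*N}. mangoldt d)"
      unfolding psi_def by (simp add: sum.union_disjoint ivl_disj_int)
    moreover have "(\<Sum>d\<in>{1..2*N}. if N < d then mangoldt d else 0) = (\<Sum>d\<in>{N<..2*N}. mangoldt d)"
    proof -
      have "{d\<in>{1..2*N}. N < d} = {N<..2*N}" by auto
      moreover have "(\<Sum>d\<in>{1..2*N}. if N < d then mangoldt d else 0) = (\<Sum>d\<in>{d\<in>{1..2*N}. N < d}. mangoldt d)"
        by (rule sum.inter_filter[symmetric]) simp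
      ultimately show ?thesis by simp
    qed
    ultimately show ?thesis by (metis add_diff_cancel_left')
  qed
  also have "\<dots> \<le> (\<Sum>d\<in>{1..2*N}. mangoldt d * (real ((2*N) div d) - 2 * real (N div d)))"
  proof (rule sum_mono)
    fix d assume d: "d \<in> {1..2*N}"
    show "(if N < d then mangoldt d else 0) \<le> mangoldt d * (real ((2*N) div d) - 2 * real (N div d))"
    proof (cases "N < d")
      case True
      hence "N div d = 0" by simp
      moreover have "(2*N) div d \<ge> 1" using d by (auto simp: less_eq_div_iff_mult_less_eq)
      hence "real ((2*N) div d) \<ge> 1" by simp
      hence "mangoldt d * 1 \<le> mangoldt d * real ((2*N) div d)" using mangoldt_nonneg[of d] by (intro mult_left_mono) auto
      thus ?thesis using True \<open>N div d = 0\<close> by simp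
    next
      case False
      have "real (2 * (N div d)) \<le> real ((2*N) div d)" using two_div_le by (simp only: of_nat_le_iff)
      thus ?thesis using False mangoldt_nonneg[of d] by simp
    qed
  qed
  also have "\<dots> = ln (fact (2*N)) - 2 * ln (fact N)"
  proof -
    have a: "ln (fact (2*N)) = (\<Sum>d\<in>{1..2*N}. mangoldt d * real ((2*N) div d))" by (rule ln_fact_mangoldt)
    have "(\<Sum>d\<in>{1..2*N}. mangoldt d * (real ((2*N) div d) - 2 * real (N div d))) =
          (\<Sum>d\<in>{1..2*N}. mangoldt d * real ((2*N) div d) - mangoldt d * (2 * real (N div d)))"
      by (rule sum.cong) (simp_all only: right_diff_distrib)
    also have "\<dots> = (\<Sum>d\<in>{1..2*N}. mangoldt d * real ((2*N) div d)) - (\<Sum>d\<in>{1..2*N}. mangoldt d * (2 * real (N div d)))"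
      by (rule sum_subtractf)
    finally show ?thesis unfolding a e1 .
  qed
  also have "\<dots> = ln (real ((2*N) choose N))"
  proof -
    have eq: "fact N * fact N * real ((2*N) choose N) = (fact (2*N) :: real)"
    proof -
      have "fact N * fact (2*N - N) * ((2*N) choose N) = (fact (2*N) :: nat)"
        by (rule binomial_fact_lemma) simp
      hence "fact N * fact N * ((2*N) choose N) = (fact (2*N) :: nat)" by (simp add: mult_2)
      hence "real (fact N * fact N * ((2*N) choose N)) = real (fact (2*N))" by (simp only:)
      thus ?thesis by (simp only: of_nat_mult of_nat_fact)
    qed
    have p1: "(fact N :: real) > 0" by simp
    have p2: "real ((2*N) choose N) > 0" by simp
    have "ln (fact (2*N) :: real) = ln (fact N * fact N) + ln (real ((2*N) choose N))"
      unfolding eq[symmetric] using p1 p2 by (intro ln_mult_pos) auto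
    also have "ln (fact N * fact N :: real) = ln (fact N) + ln (fact N)"
      using p1 by (intro ln_mult_pos) auto
    finally show ?thesis by simp
  qed
  also have "\<dots> \<le> ln (2 ^ (2*N))"
    using binomial_le_pow2[of "2*N" N] by (subst ln_le_cancel_iff) (auto simp flip: of_nat_le_iff)
  also have "\<dots> = real N * ln 4"
    by (simp add: ln_realpow power_mult ln_mult)
  finally show ?thesis .
qed

lemma psi_bound: "psi n \<le> 2 * ln 4 * real n"
proof (induction n rule: less_induct)
  case (less n)
  have l4: "ln (4::real) \<ge> 0" by simp
  show ?case
  proof (cases "n \<le> 1")
    case True
    hence "psi n = 0" by (cases n) (auto simp: psi_def)
    then show ?thesis using l4 by simp
  next
    case False
    show ?thesis
    proof (cases "even n")
      case True
      then obtain m where m: "n = 2*m" by auto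
      hence "m < n" using False by simp
      hence "psi m \<le> 2 * ln 4 * real m" by (rule less.IH)
      moreover have "psi n - psi m \<le> real m * ln 4" using cheb_step[of m] m by simp
      moreover have "ln 4 * real m \<ge> 0" using l4 by simp
      moreover have "real n = 2 * real m" using m by simp
      ultimately have "psi n \<le> 3 * (ln 4 * real m)" "3 * (ln 4 * real m) \<le> 2 * ln 4 * real n"
        by (simp_all add: algebra_simps)
      thus ?thesis by linarith
    next
      case odd: False
      then obtain m where m: "n = 2*m + 1" by (metis oddE)
      hence m1: "m \<ge> 1" using False by simp
      hence "m + 1 < n" using m by simp
      hence "psi (m+1) \<le> 2 * ln 4 * real (m+1)" by (rule less.IH)
      moreover have "psi (2*(m+1)) - psi (m+1) \<le> real (m+1) * ln 4" using cheb_step[of "m+1"] by simp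
      moreover have "psi n \<le> psi (2*(m+1))" using m by (intro psi_mono) simp
      moreover have "3 * real (m+1) * ln 4 \<le> 2 * ln 4 * real n" using m m1 l4
        by (simp add: algebra_simps)
      ultimately show ?thesis by (simp add: algebra_simps)
    qed
  qed
qed


lemma real_div_le: "real (N div d) \<le> real N / real d"
proof (cases "d = 0")
  case False
  have "(N div d) * d \<le> N" by simp
  hence "real (N div d) * real d \<le> real N" by (simp only: of_nat_mult[symmetric] of_nat_le_iff)
  thus ?thesis using False by (simp add: field_simps)
qed simp

lemma real_div_ge: "d > 0 \<Longrightarrow> real N / real d \<le> real (N div d) + 1"
proof -
  assume d: "d > 0"
  have e: "N = N div d * d + N mod d" by simp
  have "N mod d < d" using d by simp
  hence "N < N div d * d + d" using e by linarith
  hence "N < (N div d + 1) * d" by (simp add: algebra_simps)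
  hence "real N \<le> real ((N div d + 1) * d)" by linarith
  hence "real N \<le> (real (N div d) + 1) * real d" by (simp add: algebra_simps)
  thus ?thesis using d by (simp add: field_simps)
qed

lemma ln_fact_lower: "N \<ge> 1 \<Longrightarrow> real N * ln (real N) - real N \<le> ln (fact N)"
proof -
  assume N: "N \<ge> 1"
  have "exp (1/2) * sqrt (real N) * (real N / exp 1) ^ N \<le> fact N" by (rule fact_stirling(1)[OF N])
  moreover have "(real N / exp 1) ^ N \<le> exp (1/2) * sqrt (real N) * (real N / exp 1) ^ N"
  proof -
    have "1 \<le> exp (1/2::real)" by simp
    moreover have "1 \<le> sqrt (real N)" using N by simp
    ultimately have "1 \<le> exp (1/2) * sqrt (real N)" by (metis mult_mono' mult_1 zero_le_one)
    thus ?thesis by (metis mult_le_cancel_right1 zero_le_divide_iff exp_ge_zero of_nat_0_le_iff zero_le_power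
        mult_right_mono mult_1)
  qed
  ultimately have "(real N / exp 1) ^ N \<le> fact N" by linarith
  hence "ln ((real N / exp 1) ^ N) \<le> ln (fact N)" using N by (intro ln_mono) auto
  moreover have "ln ((real N / exp 1) ^ N) = real N * (ln (real N) - 1)" using N
    by (simp add: ln_realpow ln_div)
  ultimately show ?thesis by (simp add: algebra_simps)
qed

lemma ln_fact_upper: "ln (fact N) \<le> real N * ln (real N)"
proof (cases "N = 0")
  case False
  have "(fact N :: real) \<le> real (N ^ N)" by (rule fact_le_power)
  hence "ln (fact N :: real) \<le> ln (real N ^ N)" by (subst ln_le_cancel_iff) auto
  thus ?thesis by (simp add: ln_realpow)
qed simp

definition AL :: "nat \<Rightarrow> real" where "AL n = (\<Sum>d\<in>{1..n}. mangoldt d / real d)"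

lemma mertens1:
  assumes N: "N \<ge> 1"
  shows "ln (real N) - 1 \<le> AL N" "AL N \<le> ln (real N) + 2 * ln 4"
proof -
  have Np: "real N > 0" using N by simp
  have eqN: "real N * AL N = (\<Sum>d\<in>{1..N}. mangoldt d * (real N / real d))"
    unfolding AL_def by (simp add: sum_distrib_left field_simps)
  have "ln (fact N) \<le> real N * AL N"
    unfolding eqN ln_fact_mangoldt
    by (intro sum_mono mult_left_mono) (auto simp: real_div_le mangoldt_nonneg)
  with ln_fact_lower[OF N] have "real N * (ln (real N) - 1) \<le> real N * AL N" by (simp add: algebra_simps)
  thus "ln (real N) - 1 \<le> AL N" using Np by simp
  have "real N * AL N \<le> (\<Sum>d\<in>{1..N}. mangoldt d * (real (N div d) + 1))"
    unfolding eqN by (intro sum_mono mult_left_mono) (auto simp: real_div_ge mangoldt_nonneg)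
  also have "\<dots> = ln (fact N) + psi N"
    unfolding ln_fact_mangoldt psi_def by (simp add: algebra_simps sum.distrib)
  also have "\<dots> \<le> real N * ln (real N) + 2 * ln 4 * real N"
    using ln_fact_upper[of N] psi_bound[of N] by simp
  finally have "real N * AL N \<le> real N * (ln (real N) + 2 * ln 4)" by (simp add: algebra_simps)
  thus "AL N \<le> ln (real N) + 2 * ln 4" using Np by simp
qed

lemma abel_sum:
  fixes a f :: "nat \<Rightarrow> real"
  assumes "N \<ge> 2"
  shows "(\<Sum>d\<in>{2..N}. a d * f d) = (\<Sum>d\<in>{2..N}. a d) * f N + (\<Sum>d\<in>{2..<N}. (\<Sum>i\<in>{2..d}. a i) * (f d - f (Suc d)))"
  using assms
proof (induction N rule: dec_induct)
  case base then show ?case by simp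
next
  case (step n)
  have s1: "{2..Suc n} = insert (Suc n) {2..n}" "Suc n \<notin> {2..n}" using step.hyps by auto
  have s2: "{2..<Suc n} = insert n {2..<n}" "n \<notin> {2..<n}" using step.hyps by auto
  show ?case unfolding s1 s2 using step.IH by (simp add: algebra_simps)
qed


lemma telescope: "a \<le> N \<Longrightarrow> (\<Sum>d\<in>{a..<N}. (g d - g (Suc d) :: real)) = g a - g N"
proof (induction N rule: dec_induct)
  case base then show ?case by simp
next
  case (step n)
  have "{a..<Suc n} = insert n {a..<n}" "n \<notin> {a..<n}" using step.hyps by auto
  then show ?case using step.IH by simp
qed

lemma inv_sq_sum: assumes "a \<ge> 2" shows "(\<Sum>d\<in>{a..<N}. 1 / real d ^ 2) \<le> 1 / (real a - 1)"
proof (cases "a \<le> N")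
  case True
  let ?g = "\<lambda>d::nat. 1 / (real d - 1)"
  have "(\<Sum>d\<in>{a..<N}. 1 / real d ^ 2) \<le> (\<Sum>d\<in>{a..<N}. ?g d - ?g (Suc d))"
  proof (rule sum_mono)
    fix d assume "d \<in> {a..<N}"
    hence d: "real d \<ge> 2" using assms by auto
    have "?g d - ?g (Suc d) = 1 / (real d * (real d - 1))" using d by (simp add: field_simps)
    moreover have "real d * (real d - 1) \<le> real d ^ 2" using d by (simp add: power2_eq_square algebra_simps)
    moreover have "real d * (real d - 1) > 0" using d by simp
    ultimately show "1 / real d ^ 2 \<le> ?g d - ?g (Suc d)" by (simp add: frac_le)
  qed
  also have "\<dots> = ?g a - ?g N" by (rule telescope[OF True])
  also have "\<dots> \<le> ?g a" using True assms by simp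
  finally show ?thesis .
next
  case False then show ?thesis using assms by simp
qed

lemma AL_from2: "(\<Sum>i\<in>{2..d}. mangoldt i / real i) = AL d"
proof (cases "d = 0")
  case False
  have "{1..d} = insert 1 {2..d}" using False by auto
  thus ?thesis unfolding AL_def by simp
qed (simp add: AL_def)

definition K1 :: real where "K1 = 2 * ln 4"

lemma K1_pos: "K1 \<ge> 1"
proof -
  have "exp (1/2) \<le> (4::real)"
  proof -
    have "exp (1/2) \<le> exp (1::real)" by simp
    thus ?thesis using exp_le by linarith
  qed
  hence "1/2 \<le> ln (4::real)" by (subst ln_ge_iff) auto
  thus ?thesis by (simp add: K1_def)
qed

lemma AL_approx: "d \<ge> 1 \<Longrightarrow> \<bar>AL d - ln (real d)\<bar> \<le> K1"
  using mertens1[of d] K1_pos unfolding K1_def by (auto simp: abs_le_iff)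

lemma ln3_ge1: "ln (3::real) \<ge> 1"
proof -
  have "exp 1 \<le> (3::real)" using exp_le by simp
  thus ?thesis by (simp add: ln_ge_iff)
qed

definition TL :: "nat \<Rightarrow> real" where "TL N = (\<Sum>d\<in>{2..N}. mangoldt d / (real d * ln (real d)))"

definition K2 :: real where "K2 = 3 + 2 * K1 / ln 2 + \<bar>ln (ln 2)\<bar>"

lemma u_bounds:
  fixes d :: nat assumes d: "d \<ge> 2"
  defines "u \<equiv> 1 - ln (real d) / ln (real (Suc d))"
  shows "0 \<le> u" "u \<le> 1 / real d" "u \<le> 1/2"
    "u \<le> ln (ln (real (Suc d))) - ln (ln (real d))"
    "ln (ln (real (Suc d))) - ln (ln (real d)) \<le> u + 2 / real d ^ 2"
proof -
  have dp: "real d \<ge> 2" using d by simp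
  have d0: "0 < d" using d by simp
  have l1: "ln (real d) > 0" using dp by simp
  have l2: "ln (real (Suc d)) \<ge> 1"
    using ln3_ge1 dp by (smt (verit) ln_le_cancel_iff of_nat_Suc)
  have lm: "ln (real d) \<le> ln (real (Suc d))" using dp by simp
  have diff: "ln (real (Suc d)) - ln (real d) \<le> 1 / real d"
  proof -
    have "1 + 1 / real d = real (Suc d) / real d" using dp by (simp add: field_simps)
    hence "ln (1 + 1 / real d) = ln (real (Suc d)) - ln (real d)" using dp
      by (simp only:) (rule ln_divide_pos, auto)
    hence "ln (real (Suc d)) - ln (real d) = ln (1 + 1 / real d)" by simp
    also have "\<dots> \<le> 1 / real d" by (rule ln_add_one_self_le_self) simp
    finally show ?thesis .
  qed
  have ueq: "u = (ln (real (Suc d)) - ln (real d)) / ln (real (Suc d))"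
  proof -
    have "ln (real (Suc d)) \<noteq> 0" using l2 by linarith
    moreover have "(0::nat) < d" using dp by simp
    ultimately show ?thesis unfolding u_def by (simp add: diff_divide_distrib)
  qed
  show "0 \<le> u" unfolding ueq using lm l2 d0 by simp
  have "u \<le> (ln (real (Suc d)) - ln (real d)) / 1" unfolding ueq using l2 lm d0 by (intro divide_left_mono) auto
  thus u1: "u \<le> 1 / real d" using diff by simp
  thus u2: "u \<le> 1/2" using dp by (smt (verit) frac_le zero_less_one)
  have u0: "0 \<le> u" unfolding ueq using lm l2 d0 by simp
  have "1 - u = ln (real d) / ln (real (Suc d))" unfolding u_def by simp
  hence e: "ln (ln (real (Suc d))) - ln (ln (real d)) = - ln (1 - u)"
    using l1 l2 by (simp add: ln_div)
  show "u \<le> ln (ln (real (Suc d))) - ln (ln (real d))"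
    unfolding e using ln_one_minus_pos_upper_bound[of u] u0 u2 by simp
  have "- ln (1 - u) \<le> u + 2 * u^2" using ln_one_minus_pos_lower_bound[of u] u0 u2 by simp
  moreover have "u^2 \<le> 1 / real d ^ 2"
    using u1 u0 power_mono[of u "1/real d" 2] by (simp add: power_divide)
  ultimately show "ln (ln (real (Suc d))) - ln (ln (real d)) \<le> u + 2 / real d ^ 2" unfolding e by simp
qed

lemma mertens2: assumes N: "N \<ge> 2" shows "\<bar>TL N - ln (ln (real N))\<bar> \<le> K2"
proof -
  define f :: "nat \<Rightarrow> real" where "f d = 1 / ln (real d)" for d
  define w where "w d = f d - f (Suc d)" for d
  define u where "u d = 1 - ln (real d) / ln (real (Suc d))" for d
  have ln2: "ln (2::real) > 0" by simp
  have TLe: "TL N = AL N * f N + (\<Sum>d\<in>{2..<N}. AL d * w d)"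
  proof -
    have "TL N = (\<Sum>d\<in>{2..N}. (mangoldt d / real d) * f d)"
      unfolding TL_def f_def by (intro sum.cong) auto
    also have "\<dots> = AL N * f N + (\<Sum>d\<in>{2..<N}. AL d * w d)"
      unfolding abel_sum[OF N] AL_from2 w_def ..
    finally show ?thesis .
  qed
  have w0: "\<And>d. d \<ge> 2 \<Longrightarrow> w d \<ge> 0"
  proof -
    fix d :: nat assume d: "d \<ge> 2"
    have "ln (real d) \<le> ln (real (Suc d))" "ln (real d) > 0" using d by auto
    thus "w d \<ge> 0" unfolding w_def f_def by (simp add: frac_le)
  qed
  have uw: "\<And>d. d \<ge> 2 \<Longrightarrow> ln (real d) * w d = u d"
  proof -
    fix d :: nat assume d: "d \<ge> 2"
    have "ln (real d) > 0" using d by auto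
    thus "ln (real d) * w d = u d" unfolding w_def f_def u_def by (simp add: algebra_simps)
  qed
  have split: "(\<Sum>d\<in>{2..<N}. AL d * w d) = (\<Sum>d\<in>{2..<N}. u d) + (\<Sum>d\<in>{2..<N}. (AL d - ln (real d)) * w d)"
    by (subst sum.distrib[symmetric]) (auto intro!: sum.cong simp: uw[symmetric] algebra_simps)
  have sw: "(\<Sum>d\<in>{2..<N}. w d) = f 2 - f N" unfolding w_def using N by (rule telescope)
  have fN: "f N > 0" "f N \<le> 1 / ln 2" using N unfolding f_def by (auto intro!: divide_left_mono)
  have e2: "\<bar>\<Sum>d\<in>{2..<N}. (AL d - ln (real d)) * w d\<bar> \<le> K1 / ln 2"
  proof -
    have "\<bar>\<Sum>d\<in>{2..<N}. (AL d - ln (real d)) * w d\<bar> \<le> (\<Sum>d\<in>{2..<N}. \<bar>(AL d - ln (real d)) * w d\<bar>)"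
      by (rule sum_abs)
    also have "\<dots> \<le> (\<Sum>d\<in>{2..<N}. K1 * w d)"
    proof (rule sum_mono)
      fix d assume "d \<in> {2..<N}"
      hence d: "d \<ge> 2" by simp
      have "\<bar>(AL d - ln (real d)) * w d\<bar> = \<bar>AL d - ln (real d)\<bar> * w d" using w0[OF d] by (simp add: abs_mult)
      also have "\<dots> \<le> K1 * w d" using AL_approx[of d] d w0[OF d] by (intro mult_right_mono) auto
      finally show "\<bar>(AL d - ln (real d)) * w d\<bar> \<le> K1 * w d" .
    qed
    also have "\<dots> = K1 * (f 2 - f N)" by (simp add: sum_distrib_left[symmetric] sw)
    also have "\<dots> \<le> K1 * f 2" using fN K1_pos by simp
    finally show ?thesis by (simp add: f_def)
  qed
  have e1: "\<bar>AL N * f N - 1\<bar> \<le> K1 / ln 2"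
  proof -
    have lN: "ln (real N) > 0" using N by simp
    have "AL N * f N - 1 = (AL N - ln (real N)) * f N" unfolding f_def using lN by (simp add: field_simps)
    hence "\<bar>AL N * f N - 1\<bar> = \<bar>AL N - ln (real N)\<bar> * f N" using fN by (simp add: abs_mult)
    also have "\<dots> \<le> K1 * (1 / ln 2)" using AL_approx[of N] N fN K1_pos by (intro mult_mono) auto
    finally show ?thesis by simp
  qed
  have L: "(\<Sum>d\<in>{2..<N}. ln (ln (real (Suc d))) - ln (ln (real d))) = ln (ln (real N)) - ln (ln 2)"
    using telescope[OF N, of "\<lambda>d. - ln (ln (real d))"] by simp
  have su1: "(\<Sum>d\<in>{2..<N}. u d) \<le> ln (ln (real N)) - ln (ln 2)"
    unfolding L[symmetric] by (intro sum_mono) (use u_bounds(4) in \<open>auto simp: u_def\<close>)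
  have "ln (ln (real N)) - ln (ln 2) \<le> (\<Sum>d\<in>{2..<N}. u d + 2 / real d ^ 2)"
    unfolding L[symmetric] by (intro sum_mono) (use u_bounds(5) in \<open>auto simp: u_def\<close>)
  also have "\<dots> = (\<Sum>d\<in>{2..<N}. u d) + 2 * (\<Sum>d\<in>{2..<N}. 1 / real d ^ 2)"
    by (simp add: sum.distrib sum_distrib_left)
  also have "\<dots> \<le> (\<Sum>d\<in>{2..<N}. u d) + 2"
    using inv_sq_sum[of 2 N] by simp
  finally have su2: "ln (ln (real N)) - ln (ln 2) - 2 \<le> (\<Sum>d\<in>{2..<N}. u d)" by simp
  have "TL N - ln (ln (real N)) = (AL N * f N - 1) + ((\<Sum>d\<in>{2..<N}. u d) - (ln (ln (real N)) - ln (ln 2)))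
        + 1 - ln (ln 2) + (\<Sum>d\<in>{2..<N}. (AL d - ln (real d)) * w d)"
    unfolding TLe split by simp
  thus ?thesis using e1 e2 su1 su2 unfolding K2_def by (simp add: abs_le_iff) linarith
qed


lemma gp_tail: assumes p: "real p \<ge> 2" shows "(\<Sum>j\<in>{2..N}. 1 / real p ^ j) \<le> 2 / real p ^ 2"
proof (cases "2 \<le> N")
  case True
  define x where "x = 1 / real p"
  have x: "0 \<le> x" "x \<le> 1/2" using p by (auto simp: x_def)
  have "(1 - x) * (\<Sum>j\<in>{2..N}. x ^ j) = x^2 - x ^ Suc N" by (rule sum_gp_multiplied[OF True])
  also have "\<dots> \<le> x^2" using x by simp
  finally have h: "(1 - x) * (\<Sum>j\<in>{2..N}. x ^ j) \<le> x^2" .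
  have s0: "(\<Sum>j\<in>{2..N}. x ^ j) \<ge> 0" using x by (simp add: sum_nonneg)
  have "(1/2) * (\<Sum>j\<in>{2..N}. x ^ j) \<le> (1 - x) * (\<Sum>j\<in>{2..N}. x ^ j)"
    using x s0 by (intro mult_right_mono) auto
  with h have "(\<Sum>j\<in>{2..N}. x ^ j) \<le> 2 * x^2" by simp
  thus ?thesis by (simp add: x_def power_divide)
next
  case False then show ?thesis by simp
qed

lemma prime_part: assumes N: "N \<ge> 2"
  shows "0 \<le> TL N - (\<Sum>p\<in>{p. prime p \<and> p \<le> N}. 1 / real p)"
    "TL N - (\<Sum>p\<in>{p. prime p \<and> p \<le> N}. 1 / real p) \<le> 2"
proof -
  define g where "g d = mangoldt d / (real d * ln (real d))" for d :: nat
  have g0: "g d \<ge> 0" for d unfolding g_def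
    by (cases "d = 0") (auto intro!: divide_nonneg_nonneg mangoldt_nonneg)
  have pr: "{p. prime p \<and> p \<le> N} = {d\<in>{2..N}. prime d}" by (auto dest: prime_ge_2_nat)
  let ?A = "{d\<in>{2..N}. prime d}" and ?B = "{d\<in>{2..N}. \<not> prime d}"
  let ?B' = "{d\<in>{2..N}. \<not> prime d \<and> primepow d}"
  have "TL N = (\<Sum>d\<in>?A \<union> ?B. g d)"
    unfolding TL_def g_def by (intro sum.cong) auto
  also have "\<dots> = (\<Sum>d\<in>?A. g d) + (\<Sum>d\<in>?B. g d)"
    by (intro sum.union_disjoint) auto
  finally have TLs: "TL N = (\<Sum>d\<in>?A. g d) + (\<Sum>d\<in>?B. g d)" .
  have "(\<Sum>d\<in>?A. g d) = (\<Sum>p\<in>{p. prime p \<and> p \<le> N}. 1 / real p)"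
    unfolding pr
  proof (rule sum.cong[OF refl])
    fix d assume "d \<in> ?A"
    hence "prime d" "real d \<ge> 2" by (auto dest: prime_ge_2_nat)
    thus "g d = 1 / real d" unfolding g_def by simp
  qed
  hence diff: "TL N - (\<Sum>p\<in>{p. prime p \<and> p \<le> N}. 1 / real p) = (\<Sum>d\<in>?B. g d)"
    using TLs by simp
  show "0 \<le> TL N - (\<Sum>p\<in>{p. prime p \<and> p \<le> N}. 1 / real p)"
    unfolding diff by (intro sum_nonneg g0)
  have "(\<Sum>d\<in>?B. g d) = (\<Sum>d\<in>?B'. g d)"
    by (rule sum.mono_neutral_right) (auto simp: g_def mangoldt_def)
  also have "\<dots> \<le> (\<Sum>z\<in>{2..N} \<times> {2..N}. 1 / real (fst z) ^ snd z)"
  proof (rule sum_le_included[where i = "\<lambda>z. fst z ^ snd z"])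
    show "finite ?B'" by simp
    show "finite ({2..N} \<times> {2..N})" by simp
    show "\<forall>y\<in>{2..N} \<times> {2..N}. 0 \<le> 1 / real (fst y) ^ snd y" by simp
    show "\<forall>x\<in>?B'. \<exists>y\<in>{2..N} \<times> {2..N}. fst y ^ snd y = x \<and> g x \<le> 1 / real (fst y) ^ snd y"
    proof
      fix d assume d: "d \<in> ?B'"
      then obtain p k where pk: "prime p" "k > 0" "d = p ^ k" by (auto simp: primepow_def)
      have "k \<noteq> 1" using pk d by auto
      hence k2: "k \<ge> 2" using pk by simp
      have p2: "p \<ge> 2" using pk by (simp add: prime_ge_2_nat)
      have "p \<le> p ^ k" using pk p2 by (simp add: self_le_power)
      hence pN: "p \<le> N" using d pk by auto
      have "k < 2 ^ k" by (rule less_exp)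
      also have "2 ^ k \<le> p ^ k" using p2 by (rule power_mono) simp
      finally have kN: "k \<le> N" using d pk by auto
      have lp: "ln (real p) > 0" using p2 by simp
      have "g d = ln (real p) / (real p ^ k * (real k * ln (real p)))"
        unfolding g_def pk using pk by (simp add: ln_realpow)
      also have "\<dots> = 1 / (real k * real p ^ k)" using lp by (simp add: field_simps)
      also have "\<dots> \<le> 1 / real p ^ k" using k2 p2 by (intro divide_left_mono) auto
      finally show "\<exists>y\<in>{2..N} \<times> {2..N}. fst y ^ snd y = d \<and> g d \<le> 1 / real (fst y) ^ snd y"
        using pk k2 kN p2 pN by (intro bexI[of _ "(p, k)"]) auto
    qed
  qed
  also have "\<dots> = (\<Sum>p\<in>{2..N}. \<Sum>j\<in>{2..N}. 1 / real p ^ j)"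
    by (simp add: sum.cartesian_product case_prod_beta)
  also have "\<dots> \<le> (\<Sum>p\<in>{2..N}. 2 / real p ^ 2)"
    by (intro sum_mono gp_tail) auto
  also have "\<dots> = 2 * (\<Sum>p\<in>{2..<Suc N}. 1 / real p ^ 2)"
    by (simp add: sum_distrib_left atLeastLessThanSuc_atLeastAtMost)
  also have "\<dots> \<le> 2" using inv_sq_sum[of 2 "Suc N"] by simp
  finally show "TL N - (\<Sum>p\<in>{p. prime p \<and> p \<le> N}. 1 / real p) \<le> 2" unfolding diff .
qed


definition KM :: real where "KM = K2 + 2 + ln 2"

lemma PP_eq: assumes "y \<ge> 4" shows "PP y = {p. prime p \<and> p \<le> nat \<lceil>y\<rceil> - 1}"
  unfolding PP_def
proof (intro Collect_cong conj_cong refl)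
  fix p :: nat
  have "real p < y \<longleftrightarrow> int p < \<lceil>y\<rceil>" by (simp add: less_ceiling_iff)
  also have "\<dots> \<longleftrightarrow> p < nat \<lceil>y\<rceil>" using assms by linarith
  also have "\<dots> \<longleftrightarrow> p \<le> nat \<lceil>y\<rceil> - 1" using assms by (simp add: less_Suc_eq_le[symmetric])
  finally show "real p < y \<longleftrightarrow> p \<le> nat \<lceil>y\<rceil> - 1" .
qed

lemma N_of_y: assumes "y \<ge> 4"
  shows "nat \<lceil>y\<rceil> - 1 \<ge> 3" "real (nat \<lceil>y\<rceil> - 1) < y" "real (nat \<lceil>y\<rceil> - 1) \<ge> y - 1"
proof -
  have c: "of_int \<lceil>y\<rceil> < y + 1" "y \<le> of_int \<lceil>y\<rceil>" by linarith+
  have "\<lceil>y\<rceil> \<ge> 4" using assms by linarith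
  hence "nat \<lceil>y\<rceil> - 1 = nat (\<lceil>y\<rceil> - 1)" by linarith
  hence r: "real (nat \<lceil>y\<rceil> - 1) = of_int \<lceil>y\<rceil> - 1" using \<open>\<lceil>y\<rceil> \<ge> 4\<close> by simp
  show "nat \<lceil>y\<rceil> - 1 \<ge> 3" using \<open>\<lceil>y\<rceil> \<ge> 4\<close> by linarith
  show "real (nat \<lceil>y\<rceil> - 1) < y" using r c by linarith
  show "real (nat \<lceil>y\<rceil> - 1) \<ge> y - 1" using r c by linarith
qed

lemma mertens_nat: assumes "N \<ge> 2"
  shows "\<bar>(\<Sum>p\<in>{p. prime p \<and> p \<le> N}. 1 / real p) - ln (ln (real N))\<bar> \<le> K2 + 2"
  using mertens2[OF assms] prime_part[OF assms] by (simp add: abs_le_iff)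

lemma mertens_real: assumes y: "y \<ge> 4"
  shows "\<bar>(\<Sum>p\<in>PP y. 1 / real p) - ln (ln y)\<bar> \<le> KM"
proof -
  define N where "N = nat \<lceil>y\<rceil> - 1"
  have N: "N \<ge> 3" "real N < y" "real N \<ge> y - 1" using N_of_y[OF y] unfolding N_def by auto
  have m: "\<bar>(\<Sum>p\<in>PP y. 1 / real p) - ln (ln (real N))\<bar> \<le> K2 + 2"
    unfolding PP_eq[OF y] N_def[symmetric] using mertens_nat N by simp
  have lN: "ln (real N) > 0" using N by simp
  have up: "ln (ln (real N)) \<le> ln (ln y)" using N lN by simp
  have "y / 2 \<le> real N" using N y by simp
  hence "ln (y / 2) \<le> ln (real N)" using y by (intro ln_mono) auto
  hence a: "ln y - ln 2 \<le> ln (real N)" using y by (simp add: ln_div)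
  have "ln 4 \<le> ln y" using y by simp
  moreover have "ln (4::real) = 2 * ln 2" using ln_realpow[of 2 2] by simp
  ultimately have "ln y / 2 \<le> ln (real N)" using a by simp
  hence "ln (ln y / 2) \<le> ln (ln (real N))" using y by (intro ln_mono) auto
  hence lo: "ln (ln y) - ln 2 \<le> ln (ln (real N))" using y by (simp add: ln_div)
  show ?thesis using m up lo unfolding KM_def by (simp add: abs_le_iff)
qed

lemma inv_sq_subset: assumes "a \<ge> 2" "S \<subseteq> {a..<M}"
  shows "(\<Sum>d\<in>S. 1 / real d ^ 2) \<le> 1 / (real a - 1)"
proof -
  have "(\<Sum>d\<in>S. 1 / real d ^ 2) \<le> (\<Sum>d\<in>{a..<M}. 1 / real d ^ 2)"
    using assms by (intro sum_mono2) auto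
  also have "\<dots> \<le> 1 / (real a - 1)" by (rule inv_sq_sum[OF assms(1)])
  finally show ?thesis .
qed

lemma PP_sub: "y \<ge> 4 \<Longrightarrow> {p\<in>PP y. p \<ge> a} \<subseteq> {a..<nat \<lceil>y\<rceil>}"
  using PP_eq[of y] N_of_y[of y] by auto

lemma prod_bounds: assumes y: "y \<ge> 4"
  shows "exp (- KM - 1) * ln y \<le> (\<Prod>p\<in>PP y. 1 + 1 / real p)"
    "(\<Prod>p\<in>PP y. 1 + 1 / real p) \<le> exp KM * ln y"
proof -
  let ?S = "\<Sum>p\<in>PP y. 1 / real p"
  have pos: "\<And>p. p \<in> PP y \<Longrightarrow> real p \<ge> 2" by (auto simp: PP_def dest: prime_ge_2_nat)
  have lnP: "ln (\<Prod>p\<in>PP y. 1 + 1 / real p) = (\<Sum>p\<in>PP y. ln (1 + 1 / real p))"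
  proof (rule ln_prod[OF finite_PP])
    fix p assume "p \<in> PP y"
    have "0 \<le> 1 / real p" by simp
    thus "1 + 1 / real p \<noteq> 0" by linarith
  qed
  have Ppos: "(\<Prod>p\<in>PP y. 1 + 1 / real p) > 0"
  proof (rule prod_pos)
    fix p assume "p \<in> PP y"
    have "0 \<le> 1 / real p" by simp
    thus "1 + 1 / real p > 0" by linarith
  qed
  have u: "(\<Sum>p\<in>PP y. ln (1 + 1 / real p)) \<le> ?S"
    by (intro sum_mono ln_add_one_self_le_self) auto
  have "(\<Sum>p\<in>PP y. 1 / real p - (1 / real p)^2) \<le> (\<Sum>p\<in>PP y. ln (1 + 1 / real p))"
  proof (intro sum_mono ln_one_plus_pos_lower_bound)
    fix p assume "p \<in> PP y"
    hence "real p \<ge> 2" by (rule pos)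
    thus "1 / real p \<le> 1" by simp
  qed simp
  moreover have "(\<Sum>p\<in>PP y. (1 / real p)^2) \<le> 1"
  proof -
    have "{p\<in>PP y. p \<ge> 2} = PP y" using pos by force
    hence "(\<Sum>p\<in>PP y. 1 / real p ^ 2) \<le> 1 / (real 2 - 1)"
      using inv_sq_subset[OF _ PP_sub[OF y, of 2]] by simp
    thus ?thesis by (simp add: power_divide)
  qed
  ultimately have l: "?S - 1 \<le> (\<Sum>p\<in>PP y. ln (1 + 1 / real p))" by (simp add: sum_subtractf)
  have ly: "ln y > 0" using y by simp
  have m: "\<bar>?S - ln (ln y)\<bar> \<le> KM" by (rule mertens_real[OF y])
  have "exp (- KM - 1) * ln y = exp (ln (ln y) - KM - 1)" using ly by (simp add: exp_diff exp_minus exp_add field_simps)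
  also have "\<dots> \<le> exp (?S - 1)" using m by (simp add: abs_le_iff)
  also have "\<dots> \<le> (\<Prod>p\<in>PP y. 1 + 1 / real p)" using l lnP Ppos by (metis exp_le_cancel_iff exp_ln)
  finally show "exp (- KM - 1) * ln y \<le> (\<Prod>p\<in>PP y. 1 + 1 / real p)" .
  have "(\<Prod>p\<in>PP y. 1 + 1 / real p) \<le> exp ?S" using u lnP Ppos by (metis exp_le_cancel_iff exp_ln)
  also have "\<dots> \<le> exp (ln (ln y) + KM)" using m by (simp add: abs_le_iff)
  also have "\<dots> = exp KM * ln y" using ly by (simp add: exp_add)
  finally show "(\<Prod>p\<in>PP y. 1 + 1 / real p) \<le> exp KM * ln y" .
qed


lemma KM_pos: "KM \<ge> 0"
  unfolding KM_def K2_def using K1_pos by (simp add: add_nonneg_nonneg)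

lemma pow_one_plus_le_exp: "a \<ge> 0 \<Longrightarrow> (1 + a :: real) ^ k \<le> exp (real k * a)"
proof -
  assume a: "a \<ge> 0"
  have "(1 + a) ^ k \<le> exp a ^ k" using a by (intro power_mono) auto
  thus ?thesis by (simp add: exp_of_nat_mult[symmetric])
qed

lemma pow_one_minus_ge_exp: "0 \<le> a \<Longrightarrow> a \<le> 1/2 \<Longrightarrow> exp (- 2 * real k * a) \<le> (1 - a :: real) ^ k"
proof -
  assume a: "0 \<le> a" "a \<le> 1/2"
  have "-a - 2 * a^2 \<le> ln (1 - a)" using ln_one_minus_pos_lower_bound[OF a] .
  moreover have "a * a \<le> a * (1/2)" using a by (intro mult_left_mono) auto
  hence "a^2 \<le> a / 2" by (simp add: power2_eq_square)
  ultimately have "- 2 * a \<le> ln (1 - a)" by linarith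
  moreover have "1 - a > 0" using a by simp
  ultimately have "exp (- 2 * a) \<le> 1 - a" by (metis exp_le_cancel_iff exp_ln)
  hence "exp (- 2 * a) ^ k \<le> (1 - a) ^ k" by (intro power_mono) auto
  moreover have "- 2 * real k * a = real k * (- 2 * a)" by simp
  ultimately show ?thesis by (simp only: exp_of_nat_mult[symmetric])
qed

lemma y_facts: assumes h: "h \<ge> 1"
  shows "exp (2 ^ h) \<ge> (4::real)" "ln (exp (2 ^ h :: real)) = 2 ^ h" "ln (ln (exp (2 ^ h :: real))) = real h * ln 2"
proof -
  have "(2::real) ^ h \<ge> 2" using h by (metis power_one_right power_increasing one_le_numeral)
  moreover have "exp (2::real) \<ge> 4"
  proof -
    have "exp (1::real) \<ge> 2" using exp_ge_add_one_self[of 1] by simp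
    hence "exp 1 * exp 1 \<ge> (2::real) * 2" by (intro mult_mono) auto
    thus ?thesis by (simp add: exp_add[symmetric])
  qed
  ultimately show "exp (2 ^ h) \<ge> (4::real)" by (meson exp_le_cancel_iff order_trans)
  show "ln (exp (2 ^ h :: real)) = 2 ^ h" by simp
  show "ln (ln (exp (2 ^ h :: real))) = real h * ln 2" by (simp add: ln_realpow)
qed

lemma core:
  fixes B :: real assumes B: "B \<ge> 1"
  shows "\<exists>c C L0. c > 0 \<and> C > 0 \<and> L0 > 0 \<and> (\<forall>(h::nat) (k::nat). real h * ln 2 \<ge> L0 \<and> real k \<le> B * (real h * ln 2) \<longrightarrow>
      c * ((real h * ln 2) ^ k / (2 ^ h * fact k)) \<le> Ey (exp (2 ^ h)) (chi k) \<and>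
      Ey (exp (2 ^ h)) (chi k) \<le> C * ((real h * ln 2) ^ k / (2 ^ h * fact k)))"
proof -
  define P0 :: nat where "P0 = nat \<lceil>4 * B^2\<rceil> + 2"
  define Kp where "Kp = KM + real P0"
  define c where "c = exp (- 2 * B * Kp) / (2 * exp KM)"
  define C where "C = exp (B * KM) / exp (- KM - 1)"
  have KM0: "KM \<ge> 0" by (rule KM_pos)
  have Kp0: "Kp \<ge> 0" unfolding Kp_def using KM0 by simp
  have c4: "4 * B^2 \<le> real (nat \<lceil>4 * B^2\<rceil>)" by (rule real_nat_ceiling_ge)
  have "real P0 - 1 = real (nat \<lceil>4 * B^2\<rceil>) + 1" unfolding P0_def by simp
  hence P0ge1: "real P0 - 1 \<ge> 4 * B^2" using c4 by linarith
  have P0ge2: "P0 \<ge> 2" unfolding P0_def by simp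
  note P0ge = P0ge1 P0ge2
  have B2: "B^2 > 0" using B by simp
  have "c > 0" unfolding c_def by simp
  moreover have "C > 0" unfolding C_def by simp
  moreover have "2 * Kp + 1 > 0" using Kp0 by simp
  moreover have "\<forall>(h::nat) (k::nat). real h * ln 2 \<ge> 2 * Kp + 1 \<and> real k \<le> B * (real h * ln 2) \<longrightarrow>
      c * ((real h * ln 2) ^ k / (2 ^ h * fact k)) \<le> Ey (exp (2 ^ h)) (chi k) \<and>
      Ey (exp (2 ^ h)) (chi k) \<le> C * ((real h * ln 2) ^ k / (2 ^ h * fact k))"
  proof (intro allI impI conjI)
    fix h k :: nat
    assume hk: "2 * Kp + 1 \<le> real h * ln 2 \<and> real k \<le> B * (real h * ln 2)"
    define l where "l = real h * ln 2"
    have lK: "l \<ge> 2 * Kp + 1" and kl: "real k \<le> B * l" using hk unfolding l_def by auto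
    have l0: "l > 0" using lK Kp0 by simp
    have h1: "h \<ge> 1" using l0 unfolding l_def by (cases h) auto
    define y where "y = exp (2 ^ h :: real)"
    have y4: "y \<ge> 4" and lny: "ln y = 2 ^ h" and llny: "ln (ln y) = l"
      using y_facts[OF h1] unfolding y_def l_def by auto
    define x :: "nat \<Rightarrow> real" where "x p = 1 / real p" for p
    define E where "E = esym x (PP y) k"
    define Pr where "Pr = (\<Prod>p\<in>PP y. 1 + 1 / real p)"
    have Ey: "Ey (exp (2 ^ h)) (chi k) = E / Pr" unfolding E_def Pr_def x_def y_def by (rule Ey_chi)
    have x0: "\<And>p. p \<in> PP y \<Longrightarrow> x p \<ge> 0" unfolding x_def by simp
    have Prb: "exp (- KM - 1) * 2 ^ h \<le> Pr" "Pr \<le> exp KM * 2 ^ h"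
      using prod_bounds[OF y4] unfolding Pr_def lny by auto
    have Prpos: "Pr > 0" using Prb(1) by (smt (verit) exp_gt_zero mult_pos_pos zero_less_power)
    define S where "S = (\<Sum>p\<in>PP y. x p)"
    have S: "\<bar>S - l\<bar> \<le> KM" using mertens_real[OF y4] unfolding S_def x_def llny .
    have fk: "fact k > (0::real)" by simp
    have tpos: "(2::real) ^ h > 0" by simp
    have "fact k * E \<le> S ^ k" unfolding E_def S_def by (rule esym_upper[OF finite_PP x0])
    also have "S ^ k \<le> (l * (1 + KM / l)) ^ k"
    proof (rule power_mono)
      show "S \<le> l * (1 + KM / l)" using S l0 by (simp add: algebra_simps abs_le_iff)
      show "0 \<le> S" unfolding S_def using x0 by (simp add: sum_nonneg)
    qed
    also have "\<dots> = l ^ k * (1 + KM / l) ^ k" by (simp add: power_mult_distrib)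
    also have "\<dots> \<le> l ^ k * exp (real k * (KM / l))"
      using pow_one_plus_le_exp[of "KM / l" k] KM0 l0 by (intro mult_left_mono) auto
    also have "\<dots> \<le> l ^ k * exp (B * KM)"
    proof -
      have "real k * (KM / l) = (real k / l) * KM" by simp
      also have "\<dots> \<le> B * KM" using kl l0 KM0 by (intro mult_right_mono) (auto simp: divide_le_eq)
      finally show ?thesis using l0 by simp
    qed
    finally have Eu: "fact k * E \<le> l ^ k * exp (B * KM)" .
    have "E / Pr \<le> E / (exp (- KM - 1) * 2 ^ h)"
    proof (rule divide_left_mono)
      show "0 \<le> E" unfolding E_def using x0 by (rule esym_nonneg)
    qed (use Prb(1) Prpos in \<open>auto intro!: mult_pos_pos\<close>)
    also have "\<dots> \<le> (l ^ k * exp (B * KM) / fact k) / (exp (- KM - 1) * 2 ^ h)"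
      using Eu fk by (intro divide_right_mono) (auto simp: field_simps)
    also have "\<dots> = C * (l ^ k / (2 ^ h * fact k))" unfolding C_def by (simp add: field_simps)
    finally show "Ey (exp (2 ^ h)) (chi k) \<le> C * ((real h * ln 2) ^ k / (2 ^ h * fact k))"
      unfolding Ey l_def .
    define P' where "P' = {p\<in>PP y. p \<ge> P0}"
    define S' where "S' = (\<Sum>p\<in>P'. x p)"
    define Q' where "Q' = (\<Sum>p\<in>P'. x p ^ 2)"
    have fP': "finite P'" unfolding P'_def using finite_PP by simp
    have x0': "\<And>p. p \<in> P' \<Longrightarrow> x p \<ge> 0" unfolding x_def by simp
    have Q'b: "Q' \<le> 1 / (real P0 - 1)"
      unfolding Q'_def P'_def x_def using inv_sq_subset[OF P0ge(2) PP_sub[OF y4]] by (simp add: power_divide)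
    have Q'0: "Q' \<ge> 0" unfolding Q'_def by (simp add: sum_nonneg)
    have "S - S' = (\<Sum>p\<in>{p\<in>PP y. p < P0}. x p)"
    proof -
      have "PP y = P' \<union> {p\<in>PP y. p < P0}" unfolding P'_def by auto
      hence "S = (\<Sum>p\<in>P' \<union> {p\<in>PP y. p < P0}. x p)" unfolding S_def by simp
      also have "\<dots> = S' + (\<Sum>p\<in>{p\<in>PP y. p < P0}. x p)" unfolding S'_def
        using finite_PP by (intro sum.union_disjoint) (auto simp: P'_def)
      finally have "S = S' + (\<Sum>p\<in>{p\<in>PP y. p < P0}. x p)" .
      thus ?thesis by simp
    qed
    also have "\<dots> \<le> (\<Sum>p\<in>{p\<in>PP y. p < P0}. 1)"
    proof (rule sum_mono)
      fix p assume "p \<in> {p\<in>PP y. p < P0}"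
      hence "real p \<ge> 1" by (auto simp: PP_def dest: prime_ge_1_nat)
      thus "x p \<le> 1" unfolding x_def by simp
    qed
    also have "\<dots> \<le> (\<Sum>p\<in>{..<P0}. 1)"
      by (intro sum_mono2) auto
    finally have SS': "S - S' \<le> real P0" by simp
    have S'l: "S' \<ge> l - Kp" using SS' S unfolding Kp_def by (simp add: abs_le_iff)
    have S'2: "S' \<ge> l / 2" using S'l lK by simp
    have S'0: "S' > 0" using S'2 l0 by simp
    have low: "S' ^ k \<le> fact k * esym x P' k + real (k choose 2) * Q' * S' ^ (k - 2)"
      unfolding S'_def Q'_def by (rule esym_lower[OF fP' x0'])
    have err: "real (k choose 2) * Q' * S' ^ (k - 2) \<le> S' ^ k / 2"
    proof (cases "k \<ge> 2")
      case False
      hence c0: "real (k choose 2) = 0" by simp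
      have "S' ^ k \<ge> 0" using S'0 by simp
      thus ?thesis unfolding c0 by simp
    next
      case True
      have c2: "real (k choose 2) \<le> real k ^ 2 / 2" unfolding choose2_real by (simp add: power2_eq_square field_simps)
      have "real k \<le> B * l" by (rule kl)
      also have "\<dots> \<le> B * (2 * S')" using S'2 B by (intro mult_left_mono) auto
      finally have "real k \<le> 2 * B * S'" by simp
      hence "real k ^ 2 \<le> (2 * B * S') ^ 2" by (intro power_mono) auto
      hence k2: "real k ^ 2 \<le> 4 * B^2 * S'^2" by (simp add: power_mult_distrib)
      have "0 < 4 * B^2" using B2 by simp
      hence "1 / (real P0 - 1) \<le> 1 / (4 * B^2)" using P0ge by (intro divide_left_mono mult_pos_pos) auto
      hence "Q' \<le> 1 / (4 * B^2)" using Q'b by linarith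
      hence "real (k choose 2) * Q' \<le> (real k ^ 2 / 2) * (1 / (4 * B^2))"
        using c2 Q'0 by (intro mult_mono) auto
      also have "\<dots> \<le> (4 * B^2 * S'^2 / 2) * (1 / (4 * B^2))"
        using k2 B2 by (intro mult_right_mono divide_right_mono) auto
      also have "\<dots> = S'^2 / 2" using B2 by simp
      finally have "real (k choose 2) * Q' * S' ^ (k - 2) \<le> S'^2 / 2 * S' ^ (k - 2)"
        using S'0 by (intro mult_right_mono) auto
      also have "\<dots> = S' ^ k / 2"
      proof -
        have "S'^2 * S' ^ (k - 2) = S' ^ k" using True by (metis power_add le_add_diff_inverse)
        thus ?thesis by simp
      qed
      finally show ?thesis .
    qed
    have E'E: "esym x P' k \<le> E" unfolding E_def P'_def using finite_PP x0 by (intro esym_mono) auto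
    have "fact k * esym x P' k \<le> fact k * E" using E'E fk by (intro mult_left_mono) auto
    hence "S' ^ k / 2 \<le> fact k * E" using low err by linarith
    moreover have "l ^ k * exp (- 2 * B * Kp) \<le> S' ^ k"
    proof -
      define a where "a = Kp / l"
      have a: "0 \<le> a" "a \<le> 1/2" unfolding a_def using Kp0 l0 lK by (auto simp: field_simps)
      have "l ^ k * exp (- 2 * B * Kp) \<le> l ^ k * exp (- 2 * real k * a)"
      proof -
        have "real k * a = (real k / l) * Kp" unfolding a_def by simp
        also have "\<dots> \<le> B * Kp" using kl l0 Kp0 by (intro mult_right_mono) (auto simp: divide_le_eq)
        finally have "real k * a \<le> B * Kp" .
        thus ?thesis using l0 by simp
      qed
      also have "\<dots> \<le> l ^ k * (1 - a) ^ k" using pow_one_minus_ge_exp[OF a] l0 by simp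
      also have "\<dots> = (l - Kp) ^ k" unfolding a_def using l0 by (simp add: power_mult_distrib[symmetric] field_simps)
      also have "\<dots> \<le> S' ^ k" using S'l lK Kp0 by (intro power_mono) auto
      finally show ?thesis .
    qed
    ultimately have El: "l ^ k * exp (- 2 * B * Kp) / 2 \<le> fact k * E" by simp
    have "c * (l ^ k / (2 ^ h * fact k)) = (l ^ k * exp (- 2 * B * Kp) / 2 / fact k) / (exp KM * 2 ^ h)"
      unfolding c_def by (simp add: field_simps)
    also have "\<dots> \<le> E / (exp KM * 2 ^ h)"
      using El fk by (intro divide_right_mono) (auto simp: field_simps)
    also have "\<dots> \<le> E / Pr"
    proof (rule divide_left_mono)
      show "0 \<le> E" unfolding E_def using x0 by (rule esym_nonneg)
    qed (use Prb Prpos in auto)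
    finally show "c * ((real h * ln 2) ^ k / (2 ^ h * fact k)) \<le> Ey (exp (2 ^ h)) (chi k)"
      unfolding Ey l_def .
  qed
  ultimately show ?thesis by blast
qed


lemma ln_one_minus_two_sided:
  fixes v :: real assumes "\<bar>v\<bar> \<le> 1/2"
  shows "- v - 2 * v^2 \<le> ln (1 - v)" "ln (1 - v) \<le> - v"
proof -
  show "ln (1 - v) \<le> - v" using ln_add_one_self_le_self2[of "-v"] assms by simp
  show "- v - 2 * v^2 \<le> ln (1 - v)"
  proof (cases "v \<ge> 0")
    case True
    then show ?thesis using ln_one_minus_pos_lower_bound[of v] assms by simp
  next
    case False
    have "(-v) - (-v)^2 \<le> ln (1 + (-v))" using False assms by (intro ln_one_plus_pos_lower_bound) auto
    moreover have "v^2 \<ge> 0" by simp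
    moreover have "ln (1 + (-v)) = ln (1 - v)" by simp
    moreover have "(-v)^2 = v^2" by simp
    ultimately show ?thesis by linarith
  qed
qed

lemma target_est:
  fixes \<epsilon> L :: real and h :: nat and t :: int
  assumes e: "0 < \<epsilon>" "\<epsilon> < 1/2" and L: "L \<ge> 4 / \<epsilon>^2"
    and hl: "\<epsilon> * L \<le> real h * ln 2" "real h * ln 2 \<le> L"
    and tt: "\<bar>real_of_int t - real h * (ln 4 - 1)\<bar> \<le> sqrt L"
  defines "k \<equiv> nat (int h + t)"
  shows "real k = real h + real_of_int t" "\<epsilon> * L \<le> real k" "real k \<le> 3 * L"
    "exp (- ln 3 / 2 - 3/2 - 2/\<epsilon>) * (1 / (2 powr t * sqrt L)) \<le> (real h * ln 2) ^ k / (2 ^ h * fact k)"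
    "(real h * ln 2) ^ k / (2 ^ h * fact k) \<le> exp (- ln \<epsilon> / 2 - 1/2) * (1 / (2 powr t * sqrt L))"
proof -
  define l where "l = real h * ln 2"
  define \<delta> where "\<delta> = real_of_int t - real h * (ln 4 - 1)"
  have ln4: "ln (4::real) = 2 * ln 2" using ln_realpow[of 2 2] by simp
  have e2: "\<epsilon>^2 > 0" using e by simp
  have "\<epsilon> * \<epsilon> < 1 * 1" using e by (intro mult_strict_mono) auto
  hence e21: "\<epsilon>^2 < 1" by (simp add: power2_eq_square)
  have L4: "L \<ge> 4" proof -
    have "4 / \<epsilon>^2 \<ge> 4" using e2 e21 by (simp add: field_simps)
    thus ?thesis using L by simp qed
  have L0: "L > 0" using L4 by simp
  define xi where "xi = sqrt L"
  have xi0: "xi > 0" unfolding xi_def using L0 by simp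
  have xi2: "xi^2 = L" unfolding xi_def using L0 by simp
  have eL: "\<epsilon> * L > 0" using e L0 by simp
  have xi1: "xi \<ge> 1" unfolding xi_def using L4 by simp
  have xiL: "xi \<le> L"
  proof -
    have "xi * 1 \<le> xi * xi" using xi1 by (intro mult_left_mono) auto
    thus ?thesis using xi2 by (simp add: power2_eq_square)
  qed
  have exi: "2 * xi \<le> \<epsilon> * L"
  proof -
    have "4 / \<epsilon>^2 * \<epsilon>^2 \<le> L * \<epsilon>^2" using mult_right_mono[OF L, of "\<epsilon>^2"] e2 by simp
    hence "4 \<le> \<epsilon>^2 * L" using e2 by (simp add: mult.commute)
    moreover have "(\<epsilon> * xi)^2 = \<epsilon>^2 * L" by (simp add: power_mult_distrib xi2)
    ultimately have "(2::real)^2 \<le> (\<epsilon> * xi)^2" by simp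
    hence "2 \<le> \<epsilon> * xi" by (rule power2_le_imp_le) (use e xi0 in auto)
    hence "2 * xi \<le> \<epsilon> * xi * xi" using xi0 by (intro mult_right_mono) auto
    also have "\<dots> = \<epsilon> * L" using xi2 by (simp add: power2_eq_square mult.assoc)
    finally show ?thesis .
  qed
  have d: "\<bar>\<delta>\<bar> \<le> xi" unfolding \<delta>_def xi_def using tt .
  have Kdef: "real h + real_of_int t = 2 * l + \<delta>" unfolding l_def \<delta>_def ln4 by (simp add: algebra_simps)
  have Kpos: "real h + real_of_int t \<ge> \<epsilon> * L"
    using Kdef d hl exi xi0 unfolding l_def by (simp add: abs_le_iff)
  have ht0: "int h + t \<ge> 0"
  proof -
    have "real h + real_of_int t > 0" using Kpos eL by linarith
    thus ?thesis by linarith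
  qed
  show kr: "real k = real h + real_of_int t" unfolding k_def using ht0 by simp
  show keL: "\<epsilon> * L \<le> real k" using kr Kpos by simp
  show "real k \<le> 3 * L" using kr Kdef d xiL hl unfolding l_def by (simp add: abs_le_iff)
  define K where "K = real k"
  have K: "K = 2 * l + \<delta>" unfolding K_def kr Kdef ..
  have K0: "K > 0" unfolding K_def using keL eL by linarith
  have k1: "k \<ge> 1" using K0 unfolding K_def by simp
  have l0: "l > 0" using hl eL unfolding l_def by linarith
  define v where "v = \<delta> / K"
  have v: "\<bar>v\<bar> \<le> 1/2"
  proof -
    have "\<bar>v\<bar> = \<bar>\<delta>\<bar> / K" unfolding v_def using K0 by simp
    also have "\<dots> \<le> xi / (\<epsilon> * L)" using d keL K0 xi0 e L0 unfolding K_def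
      by (intro frac_le) auto
    also have "\<dots> \<le> 1/2" using exi e L0 by (simp add: field_simps)
    finally show ?thesis .
  qed
  have lK: "l / K = (1 - v) / 2" unfolding v_def using K0 K by (simp add: field_simps)
  have v1: "1 - v > 0" using v by simp
  have lnlK: "ln (l / K) = ln (1 - v) - ln 2" unfolding lK using v1 by (simp add: ln_div)
  have Kv: "K * v = \<delta>" unfolding v_def using K0 by simp
  have Kv2: "K * v^2 \<le> 1 / \<epsilon>"
  proof -
    have "K * v^2 = \<delta>^2 / K" unfolding v_def using K0 by (simp add: power2_eq_square)
    also have "\<dots> \<le> xi^2 / (\<epsilon> * L)" using d keL K0 e L0 unfolding K_def
      by (intro frac_le) (auto simp: abs_le_square_iff[symmetric] power2_abs)
    also have "\<dots> = 1 / \<epsilon>" using xi2 L0 e by simp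
    finally show ?thesis .
  qed
  have klo: "K * ln (1 - v) \<ge> - \<delta> - 2 / \<epsilon>"
  proof -
    have "K * (- v - 2 * v^2) \<le> K * ln (1 - v)" using ln_one_minus_two_sided(1)[OF v] K0 by (intro mult_left_mono) auto
    moreover have "K * (- v - 2 * v^2) = - \<delta> - 2 * (K * v^2)" using Kv by (simp add: algebra_simps)
    ultimately show ?thesis using Kv2 by linarith
  qed
  have khi: "K * ln (1 - v) \<le> - \<delta>"
    using mult_left_mono[OF ln_one_minus_two_sided(2)[OF v], of K] K0 Kv by simp
  define T where "T = l ^ k / (2 ^ h * fact k)"
  have T0: "T > 0" unfolding T_def using l0 by simp
  have "1 / (2 * real k) \<ge> 0" by simp
  hence st: "1/2 \<le> stir k" "stir k \<le> 3/2" using stir_bounds[OF k1] unfolding abs_le_iff by linarith+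
  have lnT: "ln T = K * ln l - real h * ln 2 - ln (fact k)"
    unfolding T_def K_def using l0 by (simp add: ln_div ln_mult ln_realpow)
  have lnfact: "ln (fact k) = stir k + (K + 1/2) * ln K - K" unfolding stir_def K_def by simp
  have lnl: "ln l = ln (l / K) + ln K" using l0 K0 by (simp add: ln_div)
  have lnT2: "ln T = (K * ln (1 - v) + \<delta>) - real_of_int t * ln 2 - ln K / 2 - stir k"
  proof -
    have "ln T = (K * ln (1 - v) + \<delta>) - (K - real h) * ln 2 - ln K / 2 - stir k + (K - \<delta> - 2 * l) + (2 * l - 2 * (real h * ln 2))"
      unfolding lnT lnfact lnl lnlK by (simp add: algebra_simps)
    moreover have "K - \<delta> - 2 * l = 0" using K by simp
    moreover have "2 * l - 2 * (real h * ln 2) = 0" unfolding l_def by simp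
    moreover have "K - real h = real_of_int t" unfolding K_def kr by simp
    ultimately show ?thesis by simp
  qed
  define R where "R = 1 / (2 powr t * sqrt L)"
  have R0: "R > 0" unfolding R_def using L0 by simp
  have lnR: "ln R = - real_of_int t * ln 2 - ln L / 2"
    unfolding R_def using L0 by (simp add: ln_div ln_mult ln_sqrt)
  have lnK: "ln \<epsilon> + ln L \<le> ln K" "ln K \<le> ln 3 + ln L"
  proof -
    have "ln (\<epsilon> * L) \<le> ln K" using keL e L0 unfolding K_def by (intro ln_mono) auto
    thus "ln \<epsilon> + ln L \<le> ln K" using e L0 by (simp add: ln_mult)
    have "ln K \<le> ln (3 * L)" using \<open>real k \<le> 3 * L\<close> K0 unfolding K_def by (intro ln_mono) auto
    thus "ln K \<le> ln 3 + ln L" using L0 by (simp add: ln_mult)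
  qed
  have lo: "ln R + (- ln 3 / 2 - 3/2 - 2/\<epsilon>) \<le> ln T"
    using lnT2 lnR lnK klo st by linarith
  have hi: "ln T \<le> ln R + (- ln \<epsilon> / 2 - 1/2)"
    using lnT2 lnR lnK khi st by linarith
  have "exp (- ln 3 / 2 - 3/2 - 2/\<epsilon>) * R = exp (ln R + (- ln 3 / 2 - 3/2 - 2/\<epsilon>))"
    using R0 by (simp add: exp_add)
  also have "\<dots> \<le> exp (ln T)" using lo by simp
  also have "\<dots> = T" using T0 by simp
  finally show "exp (- ln 3 / 2 - 3/2 - 2/\<epsilon>) * (1 / (2 powr t * sqrt L)) \<le> (real h * ln 2) ^ k / (2 ^ h * fact k)"
    unfolding R_def T_def l_def .
  have "T = exp (ln T)" using T0 by simp
  also have "\<dots> \<le> exp (ln R + (- ln \<epsilon> / 2 - 1/2))" using hi by simp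
  also have "\<dots> = exp (- ln \<epsilon> / 2 - 1/2) * R" using R0 by (simp add: exp_add)
  finally show "(real h * ln 2) ^ k / (2 ^ h * fact k) \<le> exp (- ln \<epsilon> / 2 - 1/2) * (1 / (2 powr t * sqrt L))"
    unfolding R_def T_def l_def .
qed


lemma x_facts:
  fixes \<epsilon> M x :: real and h :: nat
  assumes e: "0 < \<epsilon>" "\<epsilon> < 1/2" and M: "M \<ge> 1" and x: "x \<ge> exp (exp M)"
    and h1: "ln x powr \<epsilon> \<le> 2 ^ h" and h2: "2 ^ h \<le> ln x powr (1 - \<epsilon>)"
  shows "ln (ln x) \<ge> M" "\<epsilon> * ln (ln x) \<le> real h * ln 2" "real h * ln 2 \<le> ln (ln x)"
proof -
  have x0: "x > 0" using x by (smt (verit) exp_gt_zero)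
  have "ln x \<ge> ln (exp (exp M))" using x by (intro ln_mono) auto
  hence lx: "ln x \<ge> exp M" by simp
  have lx0: "ln x > 0" using lx by (smt (verit) exp_gt_zero)
  have "ln (ln x) \<ge> ln (exp M)" using lx by (intro ln_mono) auto
  thus LM: "ln (ln x) \<ge> M" by simp
  have "ln (ln x powr \<epsilon>) \<le> ln (2 ^ h)" using h1 lx0 by (intro ln_mono) auto
  thus "\<epsilon> * ln (ln x) \<le> real h * ln 2" by (simp add: ln_realpow)
  have "ln (2 ^ h) \<le> ln (ln x powr (1 - \<epsilon>))" using h2 by (intro ln_mono) auto
  hence "real h * ln 2 \<le> (1 - \<epsilon>) * ln (ln x)" by (simp add: ln_realpow)
  also have "\<dots> \<le> ln (ln x)" using LM M e by (simp add: algebra_simps)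
  finally show "real h * ln 2 \<le> ln (ln x)" .
qed

theorem lemma3p4:
  fixes \<epsilon> :: real
  assumes "0 < \<epsilon>" and "\<epsilon> < 1/2"
  shows "(\<forall>A::real. A \<ge> 1 \<longrightarrow>
           (\<exists>c C x0. c > 0 \<and> C > 0 \<and> (\<forall>x::real. x \<ge> x0 \<longrightarrow>
              (\<forall>(h::nat) (k::nat).
                 ln x powr \<epsilon> \<le> 2 ^ h \<and> 2 ^ h \<le> ln x powr (1 - \<epsilon>) \<and>
                 ln (ln x) / A \<le> real k \<and> real k \<le> A * ln (ln x) \<longrightarrow>
                 c * ((real h * ln 2) ^ k / (2 ^ h * fact k)) \<le> Ey (exp (2 ^ h)) (chi k) \<and>
                 Ey (exp (2 ^ h)) (chi k) \<le> C * ((real h * ln 2) ^ k / (2 ^ h * fact k))))))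
       \<and>
       (\<exists>c C x0. c > 0 \<and> C > 0 \<and> (\<forall>x::real. x \<ge> x0 \<longrightarrow>
              (\<forall>(h::nat) (t::int).
                 ln x powr \<epsilon> \<le> 2 ^ h \<and> 2 ^ h \<le> ln x powr (1 - \<epsilon>) \<and>
                 \<bar>real_of_int t - real h * (ln 4 - 1)\<bar> \<le> sqrt (ln (ln x)) \<longrightarrow>
                 c * (1 / (2 powr t * sqrt (ln (ln x)))) \<le> Ey (exp (2 ^ h)) (chi (nat (int h + t))) \<and>
                 Ey (exp (2 ^ h)) (chi (nat (int h + t))) \<le> C * (1 / (2 powr t * sqrt (ln (ln x)))))))"
proof (intro conjI allI impI)
  fix A :: real assume A: "A \<ge> 1"
  define B where "B = A / \<epsilon>"
  have B: "B \<ge> 1" unfolding B_def using A assms by (simp add: field_simps)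
  obtain c C L0 where cC: "c > 0" "C > 0" "L0 > 0" and main:
    "\<And>h k. real h * ln 2 \<ge> L0 \<and> real k \<le> B * (real h * ln 2) \<Longrightarrow>
      c * ((real h * ln 2) ^ k / (2 ^ h * fact k)) \<le> Ey (exp (2 ^ h)) (chi k) \<and>
      Ey (exp (2 ^ h)) (chi k) \<le> C * ((real h * ln 2) ^ k / (2 ^ h * fact k))"
    using core[OF B] by blast
  define M where "M = max 1 (L0 / \<epsilon>)"
  show "\<exists>c C x0. c > 0 \<and> C > 0 \<and> (\<forall>x::real. x \<ge> x0 \<longrightarrow>
              (\<forall>(h::nat) (k::nat).
                 ln x powr \<epsilon> \<le> 2 ^ h \<and> 2 ^ h \<le> ln x powr (1 - \<epsilon>) \<and>
                 ln (ln x) / A \<le> real k \<and> real k \<le> A * ln (ln x) \<longrightarrow>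
                 c * ((real h * ln 2) ^ k / (2 ^ h * fact k)) \<le> Ey (exp (2 ^ h)) (chi k) \<and>
                 Ey (exp (2 ^ h)) (chi k) \<le> C * ((real h * ln 2) ^ k / (2 ^ h * fact k))))"
  proof -
  have "\<forall>x::real. x \<ge> exp (exp M) \<longrightarrow>
              (\<forall>(h::nat) (k::nat).
                 ln x powr \<epsilon> \<le> 2 ^ h \<and> 2 ^ h \<le> ln x powr (1 - \<epsilon>) \<and>
                 ln (ln x) / A \<le> real k \<and> real k \<le> A * ln (ln x) \<longrightarrow>
                 c * ((real h * ln 2) ^ k / (2 ^ h * fact k)) \<le> Ey (exp (2 ^ h)) (chi k) \<and>
                 Ey (exp (2 ^ h)) (chi k) \<le> C * ((real h * ln 2) ^ k / (2 ^ h * fact k)))"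
  proof (intro allI impI)
    fix x :: real and h k :: nat
    assume x: "x \<ge> exp (exp M)"
    assume hk: "ln x powr \<epsilon> \<le> 2 ^ h \<and> 2 ^ h \<le> ln x powr (1 - \<epsilon>) \<and>
                 ln (ln x) / A \<le> real k \<and> real k \<le> A * ln (ln x)"
    have M1: "M \<ge> 1" unfolding M_def by simp
    note xf = x_facts[OF assms M1 x, of h]
    have LM: "ln (ln x) \<ge> M" and l1: "\<epsilon> * ln (ln x) \<le> real h * ln 2" and l2: "real h * ln 2 \<le> ln (ln x)"
      using xf hk by auto
    have "L0 / \<epsilon> \<le> M" unfolding M_def by simp
    hence "\<epsilon> * (L0 / \<epsilon>) \<le> \<epsilon> * M" using assms by (intro mult_left_mono) auto
    hence "L0 \<le> \<epsilon> * M" using assms by simp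
    also have "\<dots> \<le> \<epsilon> * ln (ln x)" using LM assms by simp
    finally have hL0: "real h * ln 2 \<ge> L0" using l1 by simp
    have "real k \<le> A * ln (ln x)" using hk by simp
    also have "\<dots> \<le> A * (real h * ln 2 / \<epsilon>)" using l1 A assms by (intro mult_left_mono) (auto simp: field_simps)
    also have "\<dots> = B * (real h * ln 2)" unfolding B_def by simp
    finally have "real k \<le> B * (real h * ln 2)" .
    thus "c * ((real h * ln 2) ^ k / (2 ^ h * fact k)) \<le> Ey (exp (2 ^ h)) (chi k) \<and>
      Ey (exp (2 ^ h)) (chi k) \<le> C * ((real h * ln 2) ^ k / (2 ^ h * fact k))"
      using main[of h k] hL0 by auto
  qed
  thus ?thesis using cC by blast
  qed
next
  define B where "B = 3 / \<epsilon>"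
  have B: "B \<ge> 1" unfolding B_def using assms by (simp add: field_simps)
  obtain c C L0 where cC: "c > 0" "C > 0" "L0 > 0" and main:
    "\<And>h k. real h * ln 2 \<ge> L0 \<and> real k \<le> B * (real h * ln 2) \<Longrightarrow>
      c * ((real h * ln 2) ^ k / (2 ^ h * fact k)) \<le> Ey (exp (2 ^ h)) (chi k) \<and>
      Ey (exp (2 ^ h)) (chi k) \<le> C * ((real h * ln 2) ^ k / (2 ^ h * fact k))"
    using core[OF B] by blast
  define M where "M = max (4 / \<epsilon>^2) (max 1 (L0 / \<epsilon>))"
  define c' where "c' = c * exp (- ln 3 / 2 - 3/2 - 2/\<epsilon>)"
  define C' where "C' = C * exp (- ln \<epsilon> / 2 - 1/2)"
  show "\<exists>c C x0. c > 0 \<and> C > 0 \<and> (\<forall>x::real. x \<ge> x0 \<longrightarrow>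
              (\<forall>(h::nat) (t::int).
                 ln x powr \<epsilon> \<le> 2 ^ h \<and> 2 ^ h \<le> ln x powr (1 - \<epsilon>) \<and>
                 \<bar>real_of_int t - real h * (ln 4 - 1)\<bar> \<le> sqrt (ln (ln x)) \<longrightarrow>
                 c * (1 / (2 powr t * sqrt (ln (ln x)))) \<le> Ey (exp (2 ^ h)) (chi (nat (int h + t))) \<and>
                 Ey (exp (2 ^ h)) (chi (nat (int h + t))) \<le> C * (1 / (2 powr t * sqrt (ln (ln x))))))"
  proof -
  have "c' > 0" "C' > 0" using cC unfolding c'_def C'_def by auto
  moreover have "\<forall>x::real. x \<ge> exp (exp M) \<longrightarrow>
              (\<forall>(h::nat) (t::int).
                 ln x powr \<epsilon> \<le> 2 ^ h \<and> 2 ^ h \<le> ln x powr (1 - \<epsilon>) \<and>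
                 \<bar>real_of_int t - real h * (ln 4 - 1)\<bar> \<le> sqrt (ln (ln x)) \<longrightarrow>
                 c' * (1 / (2 powr t * sqrt (ln (ln x)))) \<le> Ey (exp (2 ^ h)) (chi (nat (int h + t))) \<and>
                 Ey (exp (2 ^ h)) (chi (nat (int h + t))) \<le> C' * (1 / (2 powr t * sqrt (ln (ln x)))))"
  proof (intro allI impI conjI)
    fix x :: real and h :: nat and t :: int
    assume x: "x \<ge> exp (exp M)"
    assume ht: "ln x powr \<epsilon> \<le> 2 ^ h \<and> 2 ^ h \<le> ln x powr (1 - \<epsilon>) \<and>
                 \<bar>real_of_int t - real h * (ln 4 - 1)\<bar> \<le> sqrt (ln (ln x))"
    have M1: "M \<ge> 1" unfolding M_def by simp
    note xf = x_facts[OF assms M1 x, of h]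
    define L where "L = ln (ln x)"
    have LM: "L \<ge> M" and l1: "\<epsilon> * L \<le> real h * ln 2" and l2: "real h * ln 2 \<le> L"
      using xf ht unfolding L_def by auto
    have L4: "L \<ge> 4 / \<epsilon>^2" using LM unfolding M_def by simp
    have tt: "\<bar>real_of_int t - real h * (ln 4 - 1)\<bar> \<le> sqrt L" using ht unfolding L_def by simp
    note te = target_est[OF assms L4 l1 l2 tt]
    define k where "k = nat (int h + t)"
    have "L0 / \<epsilon> \<le> M" unfolding M_def by simp
    hence "\<epsilon> * (L0 / \<epsilon>) \<le> \<epsilon> * M" using assms by (intro mult_left_mono) auto
    hence "L0 \<le> \<epsilon> * M" using assms by simp
    also have "\<dots> \<le> \<epsilon> * L" using LM assms by simp
    finally have hL0: "real h * ln 2 \<ge> L0" using l1 by simp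
    have "real k \<le> 3 * L" using te(3) unfolding k_def .
    also have "\<dots> \<le> 3 * (real h * ln 2 / \<epsilon>)" using l1 assms by (simp add: field_simps)
    also have "\<dots> = B * (real h * ln 2)" unfolding B_def by simp
    finally have kB: "real k \<le> B * (real h * ln 2)" .
    note mk = main[of h k, OF conjI[OF hL0 kB]]
    define T where "T = (real h * ln 2) ^ k / (2 ^ h * fact k)"
    define R where "R = 1 / (2 powr t * sqrt L)"
    have Tlo: "exp (- ln 3 / 2 - 3/2 - 2/\<epsilon>) * R \<le> T" using te(4) unfolding T_def R_def k_def .
    have Thi: "T \<le> exp (- ln \<epsilon> / 2 - 1/2) * R" using te(5) unfolding T_def R_def k_def .
    have "c' * R = c * (exp (- ln 3 / 2 - 3/2 - 2/\<epsilon>) * R)" unfolding c'_def by simp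
    also have "\<dots> \<le> c * T" using Tlo cC by (intro mult_left_mono) auto
    also have "\<dots> \<le> Ey (exp (2 ^ h)) (chi k)" using mk unfolding T_def by simp
    finally show "c' * (1 / (2 powr t * sqrt (ln (ln x)))) \<le> Ey (exp (2 ^ h)) (chi (nat (int h + t)))"
      unfolding R_def L_def k_def .
    have "Ey (exp (2 ^ h)) (chi k) \<le> C * T" using mk unfolding T_def by simp
    also have "\<dots> \<le> C * (exp (- ln \<epsilon> / 2 - 1/2) * R)" using Thi cC by (intro mult_left_mono) auto
    also have "\<dots> = C' * R" unfolding C'_def by simp
    finally show "Ey (exp (2 ^ h)) (chi (nat (int h + t))) \<le> C' * (1 / (2 powr t * sqrt (ln (ln x))))"
      unfolding R_def L_def k_def .
  qed
  ultimately show ?thesis by blast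
  qed
qed

end
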